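(* Let $n\ge1$, $p\ge4$, $\mathbb{T}^n=\mathbb{R}^n/\mathbb{Z}^n$, and let $b\in C^\infty(\mathbb{T}^n\times[0,\infty);\mathbb{R}^n)$ with $\|b\|_{C^k}<\infty$ for all $k$. Let $W_t$ be a standard $n$-dimensional Brownian motion and for $\varepsilon>0$ let $(X^\varepsilon_t,V^\varepsilon_t)$ solve $dX^\varepsilon_t=V^\varepsilon_tdt$, $dV^\varepsilon_t=\frac1\varepsilon(b(X^\varepsilon_t,t)-V^\varepsilon_t)dt+\sqrt{2/\varepsilon}\,dW_t$, with $X^\varepsilon_0=x$ deterministic and $\tilde V^\varepsilon_0:=V^\varepsilon_0-b(x,0)$ satisfying $\mathbf{E}\tilde V^\varepsilon_0=0$, $\mathbf{E}|\tilde V^\varepsilon_0|^p<\infty$. Then there exists a constant $C>0$, depending only on $b$ (and on $p$ and $\mathbf{E}|\tilde V^\varepsilon_0|^p$), such that for all $t\ge0$ $$\mathbf{E}|V^\varepsilon_t|^p\le C .$$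
   Context: For $f$ on $S=\mathbb{T}^n\times[0,\infty)$, $\|f\|_{C^k}=\max_{|\alpha|\le k}\sup_{z\in S}|D^\alpha f(z)|$. $b$ is viewed as $\mathbb{Z}^n$-periodic in $x$ on $\mathbb{R}^n$, positions lifted to $\mathbb{R}^n$. $V^\varepsilon_0$ is measurable with respect to the initial sigma-algebra of the filtration of $W$ (independent of $W$). *)

theory Defs
  imports "HOL-Probability.Probability"
begin

text \<open>b is viewed as a function on R^n x [0,inf), Z^n-periodic in x.\<close>
definition periodic_drift :: "(real^'n \<Rightarrow> real \<Rightarrow> real^'n) \<Rightarrow> bool" where
  "periodic_drift b \<longleftrightarrow>
     (\<forall>x t k. (\<forall>i. k $ i \<in> \<int>) \<longrightarrow> b (x + k) t = b x t)"

text \<open>All iterated partial derivatives (in the n space directions and in time, the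
  latter one-sided at t = 0) of every component of b exist on R^n x [0,inf) and are
  bounded there: F is a family containing the components of b, closed under taking
  partial derivatives, consisting of bounded functions.  This is b in C^infinity with
  finite C^k norm for every k.\<close>
definition smooth_bounded :: "(real^'n \<Rightarrow> real \<Rightarrow> real^'n) \<Rightarrow> bool" where
  "smooth_bounded b \<longleftrightarrow>
     (\<exists>F :: (real^'n \<Rightarrow> real \<Rightarrow> real) set.
        (\<forall>i. (\<lambda>x t. b x t $ i) \<in> F) \<and>
        (\<forall>f\<in>F. \<exists>B. \<forall>x t. 0 \<le> t \<longrightarrow> \<bar>f x t\<bar> \<le> B) \<and>
        (\<forall>f\<in>F.
           (\<forall>j. \<exists>g\<in>F. \<forall>x t. 0 \<le> t \<longrightarrow>
                ((\<lambda>h. f (x + h *\<^sub>R axis j 1) t) has_real_derivative g x t) (at 0)) \<and>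
           (\<exists>g\<in>F. \<forall>x t. 0 \<le> t \<longrightarrow>
                ((\<lambda>h. f x (t + h)) has_real_derivative g x t) (at 0 within {-t..}))))"

definition std_BM :: "'a measure \<Rightarrow> (real \<Rightarrow> 'a \<Rightarrow> real^'n) \<Rightarrow> bool" where
  "std_BM M W \<longleftrightarrow> prob_space M \<and>
     (\<forall>t. W t \<in> borel_measurable M) \<and>
     (AE \<omega> in M. W 0 \<omega> = 0 \<and> continuous_on {0..} (\<lambda>t. W t \<omega>)) \<and>
     (\<forall>s t. 0 \<le> s \<and> s < t \<longrightarrow>
        prob_space.indep_vars M (\<lambda>_. borel) (\<lambda>i \<omega>. (W t \<omega> - W s \<omega>) $ i) UNIV \<and>
        (\<forall>i. distributed M lborel (\<lambda>\<omega>. (W t \<omega> - W s \<omega>) $ i)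
               (normal_density 0 (sqrt (t - s))))) \<and>
     (\<forall>(ts :: nat \<Rightarrow> real) k. 0 \<le> ts 0 \<and> (\<forall>j<k. ts j < ts (Suc j)) \<longrightarrow>
        prob_space.indep_vars M (\<lambda>_. borel)
          (\<lambda>j \<omega>. W (ts (Suc j)) \<omega> - W (ts j) \<omega>) {..<k})"

definition indep_of_BM :: "'a measure \<Rightarrow> (real \<Rightarrow> 'a \<Rightarrow> real^'n) \<Rightarrow> ('a \<Rightarrow> real^'n) \<Rightarrow> bool" where
  "indep_of_BM M W Z \<longleftrightarrow>
     (\<forall>(ts :: nat \<Rightarrow> real) k. 0 \<le> ts 0 \<and> (\<forall>j<k. ts j < ts (Suc j)) \<longrightarrow>
        prob_space.indep_vars M (\<lambda>_. borel)
          (\<lambda>j \<omega>. if j = 0 then Z \<omega> else W (ts j) \<omega> - W (ts (j - 1)) \<omega>) {..k})"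

text \<open>(X,V) solves dX = V dt, dV = (1/eps)(b(X,t) - V) dt + sqrt(2/eps) dW, X_0 = x.
  Since the noise is additive, this is the pathwise integral equation.\<close>
definition langevin_solution ::
  "'a measure \<Rightarrow> real \<Rightarrow> (real^'n \<Rightarrow> real \<Rightarrow> real^'n) \<Rightarrow> real^'n \<Rightarrow>
   (real \<Rightarrow> 'a \<Rightarrow> real^'n) \<Rightarrow> (real \<Rightarrow> 'a \<Rightarrow> real^'n) \<Rightarrow> (real \<Rightarrow> 'a \<Rightarrow> real^'n) \<Rightarrow> bool" where
  "langevin_solution M \<epsilon> b x W X V \<longleftrightarrow>
     (\<forall>t. X t \<in> borel_measurable M \<and> V t \<in> borel_measurable M) \<and>
     (AE \<omega> in M. continuous_on {0..} (\<lambda>t. V t \<omega>) \<and>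
        (\<forall>t\<ge>0. X t \<omega> = x + integral {0..t} (\<lambda>s. V s \<omega>) \<and>
                V t \<omega> = V 0 \<omega> + integral {0..t} (\<lambda>s. (1 / \<epsilon>) *\<^sub>R (b (X s \<omega>) s - V s \<omega>))
                          + sqrt (2 / \<epsilon>) *\<^sub>R W t \<omega>))"

end

theory Submission
  imports Defs
begin

lemma axis_lip:
  fixes f :: "real^'n \<Rightarrow> real \<Rightarrow> real"
  assumes d: "\<forall>x t. 0 \<le> t \<longrightarrow> ((\<lambda>h. f (x + h *\<^sub>R axis j 1) t) has_real_derivative g x t) (at 0)"
    and bd: "\<forall>x t. 0 \<le> t \<longrightarrow> \<bar>g x t\<bar> \<le> L" and t: "0 \<le> t"
  shows "\<bar>f (x + h *\<^sub>R axis j 1) t - f x t\<bar> \<le> L * \<bar>h\<bar>"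
proof -
  define \<phi> where "\<phi> = (\<lambda>h. f (x + h *\<^sub>R axis j 1) t)"
  have D: "(\<phi> has_field_derivative g (x + z *\<^sub>R axis j 1) t) (at z within UNIV)" for z
  proof -
    have "((\<lambda>h. f ((x + z *\<^sub>R axis j 1) + h *\<^sub>R axis j 1) t) has_real_derivative g (x + z *\<^sub>R axis j 1) t) (at 0)"
      using d t by blast
    moreover have "(\<lambda>h. f ((x + z *\<^sub>R axis j 1) + h *\<^sub>R axis j 1) t) = (\<lambda>h. \<phi> (h + z))"
      by (auto simp: \<phi>_def algebra_simps)
    ultimately have "((\<lambda>h. \<phi> (h + z)) has_real_derivative g (x + z *\<^sub>R axis j 1) t) (at 0)" by simp
    then have "(\<phi> has_real_derivative g (x + z *\<^sub>R axis j 1) t) (at (0 + z))"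
      using DERIV_shift by blast
    then show ?thesis by simp
  qed
  have "norm (\<phi> h - \<phi> 0) \<le> L * norm (h - 0)"
    by (rule field_differentiable_bound[OF convex_UNIV D]) (use bd t in auto)
  then show ?thesis by (simp add: \<phi>_def)
qed

lemma time_lip:
  fixes \<phi> :: "real \<Rightarrow> real"
  assumes d: "\<forall>t. 0 \<le> t \<longrightarrow> ((\<lambda>h. \<phi> (t + h)) has_real_derivative g t) (at 0 within {-t..})"
    and bd: "\<forall>t. 0 \<le> t \<longrightarrow> \<bar>g t\<bar> \<le> L" and "0 \<le> s" "0 \<le> t"
  shows "\<bar>\<phi> s - \<phi> t\<bar> \<le> L * \<bar>s - t\<bar>"
proof -
  have D: "(\<phi> has_field_derivative g z) (at z within {0..})" if z: "z \<in> {0..}" for z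
  proof -
    have img: "(\<lambda>s. s - z) ` {0..} = {-z..}"
      by (auto simp: image_iff intro!: bexI[where x="_ + z"])
    have "((\<lambda>h. \<phi> (z + h)) has_real_derivative g z) (at ((\<lambda>s. s - z) z) within ((\<lambda>s. s - z) ` {0..}))"
      using d z img by simp
    moreover have "((\<lambda>s. s - z) has_real_derivative 1) (at z within {0..})"
      by (auto intro!: derivative_eq_intros)
    ultimately have "((\<lambda>h. \<phi> (z + h)) \<circ> (\<lambda>s. s - z) has_real_derivative g z * 1) (at z within {0..})"
      by (rule DERIV_image_chain)
    moreover have "((\<lambda>h. \<phi> (z + h)) \<circ> (\<lambda>s. s - z)) = \<phi>" by (auto simp: fun_eq_iff)
    ultimately show ?thesis by simp
  qed
  have "norm (\<phi> s - \<phi> t) \<le> L * norm (s - t)"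
    by (rule field_differentiable_bound[OF convex_real_interval(1) D]) (use bd assms in auto)
  then show ?thesis by simp
qed

lemma coord_lip:
  fixes f :: "real^'n \<Rightarrow> real"
  assumes L: "\<And>j x h. \<bar>f (x + h *\<^sub>R axis j 1) - f x\<bar> \<le> L j * \<bar>h\<bar>"
  assumes "finite S"
  shows "\<And>x y. (\<forall>i. i \<notin> S \<longrightarrow> y$i = x$i) \<Longrightarrow> \<bar>f y - f x\<bar> \<le> (\<Sum>i\<in>S. L i * \<bar>y$i - x$i\<bar>)"
  using assms(2)
proof (induction S rule: finite_induct)
  case empty
  then have "y = x" by (simp add: vec_eq_iff)
  then show ?case by simp
next
  case (insert a S)
  define z where "z = x + (y$a - x$a) *\<^sub>R axis a 1"
  have zi: "z$i = (if i = a then y$a else x$i)" for i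
    by (simp add: z_def axis_def)
  have "\<forall>i. i \<notin> S \<longrightarrow> y$i = z$i" using insert.prems zi by auto
  then have 1: "\<bar>f y - f z\<bar> \<le> (\<Sum>i\<in>S. L i * \<bar>y$i - z$i\<bar>)" by (rule insert.IH)
  have "(\<Sum>i\<in>S. L i * \<bar>y$i - z$i\<bar>) = (\<Sum>i\<in>S. L i * \<bar>y$i - x$i\<bar>)"
    using insert.hyps zi by (intro sum.cong) auto
  moreover have 2: "\<bar>f z - f x\<bar> \<le> L a * \<bar>y$a - x$a\<bar>" unfolding z_def by (rule L)
  ultimately have "\<bar>f y - f x\<bar> \<le> L a * \<bar>y$a - x$a\<bar> + (\<Sum>i\<in>S. L i * \<bar>y$i - x$i\<bar>)"
    using 1 by linarith
  then show ?case using insert.hyps by simp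
qed

lemma F_lip:
  fixes F :: "(real^'n \<Rightarrow> real \<Rightarrow> real) set"
  assumes bd: "\<forall>f\<in>F. \<exists>B. \<forall>x t. 0 \<le> t \<longrightarrow> \<bar>f x t\<bar> \<le> B"
    and dv: "\<forall>f\<in>F.
           (\<forall>j. \<exists>g\<in>F. \<forall>x t. 0 \<le> t \<longrightarrow>
                ((\<lambda>h. f (x + h *\<^sub>R axis j 1) t) has_real_derivative g x t) (at 0)) \<and>
           (\<exists>g\<in>F. \<forall>x t. 0 \<le> t \<longrightarrow>
                ((\<lambda>h. f x (t + h)) has_real_derivative g x t) (at 0 within {-t..}))"
    and f: "f \<in> F"
  shows "\<exists>L\<ge>0. \<forall>x y s t. 0 \<le> s \<longrightarrow> 0 \<le> t \<longrightarrow> \<bar>f y s - f x t\<bar> \<le> L * (norm (y - x) + \<bar>s - t\<bar>)"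
proof -
  obtain Bnd where Bnd0: "\<forall>g\<in>F. \<forall>x t. 0 \<le> t \<longrightarrow> \<bar>g x t\<bar> \<le> Bnd g"
    using bchoice[OF bd] by blast
  have Bnd: "\<And>g x t. g \<in> F \<Longrightarrow> 0 \<le> t \<Longrightarrow> \<bar>g x t\<bar> \<le> Bnd g" using Bnd0 by blast
  obtain G where G: "\<And>j. G j \<in> F \<and> (\<forall>x t. 0 \<le> t \<longrightarrow>
                ((\<lambda>h. f (x + h *\<^sub>R axis j 1) t) has_real_derivative G j x t) (at 0))"
    using choice[of "\<lambda>j g. g \<in> F \<and> (\<forall>x t. 0 \<le> t \<longrightarrow>
                ((\<lambda>h. f (x + h *\<^sub>R axis j 1) t) has_real_derivative g x t) (at 0))"] dv f by blast
  obtain gt where gt: "gt \<in> F" "\<forall>x t. 0 \<le> t \<longrightarrow>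
                ((\<lambda>h. f x (t + h)) has_real_derivative gt x t) (at 0 within {-t..})"
    using dv f by blast
  define L where "L = (\<Sum>j\<in>UNIV. \<bar>Bnd (G j)\<bar>) + \<bar>Bnd gt\<bar>"
  have L0: "L \<ge> 0" unfolding L_def by (auto intro: sum_nonneg)
  have ax: "\<bar>f (x + h *\<^sub>R axis j 1) t - f x t\<bar> \<le> \<bar>Bnd (G j)\<bar> * \<bar>h\<bar>" if "0 \<le> t" for x h j t
  proof (rule axis_lip[where g="G j"])
    show "\<forall>x t. 0 \<le> t \<longrightarrow> ((\<lambda>h. f (x + h *\<^sub>R axis j 1) t) has_real_derivative G j x t) (at 0)"
      using G by blast
    show "\<forall>x t. 0 \<le> t \<longrightarrow> \<bar>G j x t\<bar> \<le> \<bar>Bnd (G j)\<bar>"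
    proof (intro allI impI)
      fix x t :: _ assume "0 \<le> (t::real)"
      then have "\<bar>G j x t\<bar> \<le> Bnd (G j)" using Bnd G by blast
      then show "\<bar>G j x t\<bar> \<le> \<bar>Bnd (G j)\<bar>" by linarith
    qed
  qed (rule that)
  have sp: "\<bar>f y t - f x t\<bar> \<le> (\<Sum>j\<in>UNIV. \<bar>Bnd (G j)\<bar>) * norm (y - x)" if "0 \<le> t" for x y t
  proof -
    have "\<bar>f y t - f x t\<bar> \<le> (\<Sum>i\<in>UNIV. \<bar>Bnd (G i)\<bar> * \<bar>y$i - x$i\<bar>)"
      by (rule coord_lip[where f="\<lambda>z. f z t"]) (use ax that in auto)
    also have "\<dots> \<le> (\<Sum>i\<in>UNIV. \<bar>Bnd (G i)\<bar> * norm (y - x))"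
      by (intro sum_mono mult_left_mono) (auto simp: component_le_norm_cart[of "y - x", simplified])
    finally show ?thesis by (simp add: sum_distrib_right)
  qed
  have tm: "\<bar>f x s - f x t\<bar> \<le> \<bar>Bnd gt\<bar> * \<bar>s - t\<bar>" if "0 \<le> s" "0 \<le> t" for x s t
  proof (rule time_lip[where g="gt x"])
    show "\<forall>t. 0 \<le> t \<longrightarrow> ((\<lambda>h. f x (t + h)) has_real_derivative gt x t) (at 0 within {-t..})"
      using gt by blast
    show "\<forall>t. 0 \<le> t \<longrightarrow> \<bar>gt x t\<bar> \<le> \<bar>Bnd gt\<bar>"
    proof (intro allI impI)
      fix t :: real assume "0 \<le> t"
      then have "\<bar>gt x t\<bar> \<le> Bnd gt" using Bnd gt by blast
      then show "\<bar>gt x t\<bar> \<le> \<bar>Bnd gt\<bar>" by linarith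
    qed
  qed (use that in auto)
  show ?thesis
  proof (intro exI[of _ L] conjI allI impI L0)
    fix x y and s t :: real assume st: "0 \<le> s" "0 \<le> (t::real)"
    have "\<bar>f y s - f x t\<bar> \<le> \<bar>f y s - f x s\<bar> + \<bar>f x s - f x t\<bar>" by linarith
    also have "\<dots> \<le> (\<Sum>j\<in>UNIV. \<bar>Bnd (G j)\<bar>) * norm (y - x) + \<bar>Bnd gt\<bar> * \<bar>s - t\<bar>"
      using sp[OF st(1), of y x] tm[OF st, of x] by linarith
    also have "\<dots> \<le> L * (norm (y - x) + \<bar>s - t\<bar>)"
      unfolding L_def by (auto simp: algebra_simps intro!: add_mono mult_right_mono sum_nonneg)
    finally show "\<bar>f y s - f x t\<bar> \<le> L * (norm (y - x) + \<bar>s - t\<bar>)" .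
  qed
qed

lemma b_props:
  fixes b :: "real^'n \<Rightarrow> real \<Rightarrow> real^'n"
  assumes "smooth_bounded b"
  shows "\<exists>B\<ge>0. \<forall>x t. 0 \<le> t \<longrightarrow> norm (b x t) \<le> B"
    and "\<exists>L\<ge>0. \<forall>x y s t. 0 \<le> s \<longrightarrow> 0 \<le> t \<longrightarrow> norm (b y s - b x t) \<le> L * (norm (y - x) + \<bar>s - t\<bar>)"
proof -
  obtain F :: "(real^'n \<Rightarrow> real \<Rightarrow> real) set" where
    Fb: "\<forall>i. (\<lambda>x t. b x t $ i) \<in> F" and bd: "\<forall>f\<in>F. \<exists>B. \<forall>x t. 0 \<le> t \<longrightarrow> \<bar>f x t\<bar> \<le> B"
    and dv: "\<forall>f\<in>F.
           (\<forall>j. \<exists>g\<in>F. \<forall>x t. 0 \<le> t \<longrightarrow>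
                ((\<lambda>h. f (x + h *\<^sub>R axis j 1) t) has_real_derivative g x t) (at 0)) \<and>
           (\<exists>g\<in>F. \<forall>x t. 0 \<le> t \<longrightarrow>
                ((\<lambda>h. f x (t + h)) has_real_derivative g x t) (at 0 within {-t..}))"
    using assms unfolding smooth_bounded_def by blast
  have "\<forall>i. \<exists>B. \<forall>x t. 0 \<le> t \<longrightarrow> \<bar>b x t $ i\<bar> \<le> B"
  proof
    fix i
    show "\<exists>B. \<forall>x t. 0 \<le> t \<longrightarrow> \<bar>b x t $ i\<bar> \<le> B"
      using bspec[OF bd Fb[rule_format, of i]] by simp
  qed
  then obtain Bi where Bi0: "\<forall>i. \<forall>x t. 0 \<le> t \<longrightarrow> \<bar>b x t $ i\<bar> \<le> Bi i"
    by (rule choice[THEN exE]) blast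
  have Bi: "\<And>i x t. 0 \<le> t \<Longrightarrow> \<bar>b x t $ i\<bar> \<le> Bi i" using Bi0 by blast
  show "\<exists>B\<ge>0. \<forall>x t. 0 \<le> t \<longrightarrow> norm (b x t) \<le> B"
  proof (intro exI[of _ "\<Sum>i\<in>UNIV. \<bar>Bi i\<bar>"] conjI allI impI)
    show "0 \<le> (\<Sum>i\<in>UNIV. \<bar>Bi i\<bar>)" by (auto intro: sum_nonneg)
    fix x and t :: real assume "0 \<le> t"
    have "norm (b x t) \<le> (\<Sum>i\<in>UNIV. \<bar>b x t $ i\<bar>)" by (rule norm_le_l1_cart)
    also have "\<dots> \<le> (\<Sum>i\<in>UNIV. \<bar>Bi i\<bar>)" by (intro sum_mono order.trans[OF Bi[OF \<open>0 \<le> t\<close>]]) simp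
    finally show "norm (b x t) \<le> (\<Sum>i\<in>UNIV. \<bar>Bi i\<bar>)" .
  qed
  have "\<forall>i. \<exists>L. \<forall>x y s t. 0 \<le> s \<longrightarrow> 0 \<le> t \<longrightarrow> \<bar>b y s $ i - b x t $ i\<bar> \<le> L * (norm (y - x) + \<bar>s - t\<bar>)"
    using F_lip[OF bd dv Fb[rule_format]] by blast
  then obtain Li where Li0: "\<forall>i. \<forall>x y s t. 0 \<le> s \<longrightarrow> 0 \<le> t \<longrightarrow> \<bar>b y s $ i - b x t $ i\<bar> \<le> Li i * (norm (y - x) + \<bar>s - t\<bar>)"
    by (rule choice[THEN exE]) blast
  have Li: "\<And>i x y s t. 0 \<le> s \<Longrightarrow> 0 \<le> t \<Longrightarrow> \<bar>b y s $ i - b x t $ i\<bar> \<le> Li i * (norm (y - x) + \<bar>s - t\<bar>)"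
    using Li0 by blast
  show "\<exists>L\<ge>0. \<forall>x y s t. 0 \<le> s \<longrightarrow> 0 \<le> t \<longrightarrow> norm (b y s - b x t) \<le> L * (norm (y - x) + \<bar>s - t\<bar>)"
  proof (intro exI[of _ "\<Sum>i\<in>UNIV. \<bar>Li i\<bar>"] conjI allI impI)
    show "0 \<le> (\<Sum>i\<in>UNIV. \<bar>Li i\<bar>)" by (auto intro: sum_nonneg)
    fix x y and s t :: real assume st: "0 \<le> s" "0 \<le> t"
    have "norm (b y s - b x t) \<le> (\<Sum>i\<in>UNIV. \<bar>(b y s - b x t) $ i\<bar>)" by (rule norm_le_l1_cart)
    also have "\<dots> \<le> (\<Sum>i\<in>UNIV. \<bar>Li i\<bar> * (norm (y - x) + \<bar>s - t\<bar>))"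
    proof (intro sum_mono)
      fix i :: 'n
      have "Li i * (norm (y - x) + \<bar>s - t\<bar>) \<le> \<bar>Li i\<bar> * (norm (y - x) + \<bar>s - t\<bar>)"
        by (intro mult_right_mono) auto
      then show "\<bar>(b y s - b x t) $ i\<bar> \<le> \<bar>Li i\<bar> * (norm (y - x) + \<bar>s - t\<bar>)"
        using Li[where i=i and x=x and y=y, OF st] by simp
    qed
    finally show "norm (b y s - b x t) \<le> (\<Sum>i\<in>UNIV. \<bar>Li i\<bar>) * (norm (y - x) + \<bar>s - t\<bar>)"
      by (simp add: sum_distrib_right)
  qed
qed

lemma sum_powr_le:
  fixes a :: "'i \<Rightarrow> real"
  assumes "finite I" "I \<noteq> {}" "\<And>i. i \<in> I \<Longrightarrow> 0 \<le> a i" "0 < p"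
  shows "(\<Sum>i\<in>I. a i) powr p \<le> real (card I) powr p * (\<Sum>i\<in>I. a i powr p)"
proof -
  define M where "M = Max (a ` I)"
  have MI: "M \<in> a ` I" unfolding M_def using assms by auto
  then obtain i0 where i0: "i0 \<in> I" "M = a i0" by auto
  have le: "a i \<le> M" if "i \<in> I" for i unfolding M_def using assms that by auto
  have M0: "0 \<le> M" using i0 assms by auto
  have "(\<Sum>i\<in>I. a i) \<le> (\<Sum>i\<in>I. M)" by (intro sum_mono le)
  also have "\<dots> = real (card I) * M" by simp
  finally have s: "(\<Sum>i\<in>I. a i) \<le> real (card I) * M" .
  have "(\<Sum>i\<in>I. a i) powr p \<le> (real (card I) * M) powr p"
    by (intro powr_mono2) (use s assms in \<open>auto intro: sum_nonneg\<close>)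
  also have "\<dots> = real (card I) powr p * M powr p" using M0 by (simp add: powr_mult)
  also have "M powr p \<le> (\<Sum>i\<in>I. a i powr p)"
    using i0 assms by (intro member_le_sum[where f="\<lambda>i. a i powr p" and i=i0, simplified i0(2)[symmetric]]) auto
  then have "real (card I) powr p * M powr p \<le> real (card I) powr p * (\<Sum>i\<in>I. a i powr p)"
    by (intro mult_left_mono) auto
  finally show ?thesis .
qed

lemma young_pt:
  fixes a c p :: real
  assumes "1 < p" "0 \<le> a" "0 < c"
  shows "a \<le> a powr p / (p * c powr (p - 1)) + c * (1 - 1 / p)"
proof -
  define q where "q = p / (p - 1)"
  have q1: "1 < q" using assms unfolding q_def by (simp add: field_simps)
  have pq: "1 / p + 1 / q = 1" using assms unfolding q_def by (simp add: field_simps)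
  have "(a / c) * 1 \<le> (a / c) powr p / p + 1 powr q / q"
    by (rule Youngs_inequality) (use assms q1 pq in auto)
  then have "c * (a / c) \<le> c * ((a / c) powr p / p + 1 / q)"
    using assms by (intro mult_left_mono) auto
  also have "c * ((a / c) powr p / p + 1 / q) = a powr p / (p * c powr (p - 1)) + c * (1 - 1 / p)"
  proof -
    have "(a / c) powr p = a powr p / c powr p" using assms by (simp add: powr_divide)
    moreover have "c powr p = c * c powr (p - 1)" using assms
      by (simp add: powr_diff powr_one[of c])
    ultimately have e1: "c * (a / c) powr p = a powr p / c powr (p - 1)" using assms by simp
    have e2: "1 / q = 1 - 1 / p" using pq by simp
    have "c * ((a / c) powr p / p + 1 / q) = (c * (a / c) powr p) / p + c * (1 / q)"
      by (simp add: distrib_left)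
    also have "\<dots> = a powr p / (p * c powr (p - 1)) + c * (1 - 1 / p)"
      unfolding e1 e2 by simp
    finally show ?thesis .
  qed
  finally show ?thesis using assms by simp
qed

lemma abs_powr_le_even:
  fixes y p :: real
  assumes "0 \<le> p" "p \<le> real (2 * k)"
  shows "\<bar>y\<bar> powr p \<le> 1 + y ^ (2 * k)"
proof (cases "\<bar>y\<bar> \<le> 1")
  case True
  then have "\<bar>y\<bar> powr p \<le> 1"
    using assms by (cases "y = 0") (auto intro: powr_le1)
  moreover have "0 \<le> y ^ (2 * k)" by (simp add: power_mult)
  ultimately show ?thesis by linarith
next
  case False
  then have "\<bar>y\<bar> powr p \<le> \<bar>y\<bar> powr (real (2 * k))"
    using assms by (intro powr_mono) auto
  also have "\<dots> = \<bar>y\<bar> ^ (2 * k)" using False by (subst powr_realpow) auto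
  also have "\<dots> = y ^ (2 * k)" by (simp add: power_even_abs)
  finally show ?thesis by simp
qed

lemma powr_exp_bound:
  fixes u a :: real
  assumes "0 \<le> u" "0 < a"
  shows "u powr a * exp (- u / 2) \<le> (2 * a) powr a"
proof -
  have "u / (2 * a) \<le> exp (u / (2 * a))"
    using exp_ge_add_one_self[of "u / (2*a)"] by linarith
  then have "(u / (2 * a)) powr a \<le> exp (u / (2 * a)) powr a"
    using assms by (intro powr_mono2) auto
  also have "exp (u / (2 * a)) powr a = exp (u / 2)"
    using assms by (simp add: powr_def)
  finally have "u powr a / (2 * a) powr a \<le> exp (u / 2)"
    using assms by (simp add: powr_divide)
  then have "u powr a \<le> exp (u / 2) * (2 * a) powr a"
    using assms by (simp add: divide_le_eq mult.commute)
  then have "u powr a * exp (- u / 2) \<le> exp (u / 2) * (2 * a) powr a * exp (- u / 2)"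
    by (intro mult_right_mono) auto
  also have "\<dots> = (2 * a) powr a" by (simp add: exp_minus[of "u/2"] field_simps)
  finally show ?thesis .
qed

lemma holder_int:
  fixes w g :: "real \<Rightarrow> real"
  assumes p: "1 < p" and w0: "\<And>s. s \<in> S \<Longrightarrow> 0 \<le> w s" and g0: "\<And>s. s \<in> S \<Longrightarrow> 0 \<le> g s"
    and i1: "w integrable_on S" and i2: "(\<lambda>s. w s * g s) integrable_on S"
    and i3: "(\<lambda>s. w s * g s powr p) integrable_on S"
    and w1: "integral S w \<le> 1"
  shows "(integral S (\<lambda>s. w s * g s)) powr p \<le> integral S (\<lambda>s. w s * g s powr p)"
proof -
  define I where "I = integral S (\<lambda>s. w s * g s)"
  define J where "J = integral S (\<lambda>s. w s * g s powr p)"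
  have I0: "0 \<le> I" unfolding I_def using i2 w0 g0 by (intro integral_nonneg) auto
  have J0: "0 \<le> J" unfolding J_def using i3 w0 g0 by (intro integral_nonneg) auto
  have W0: "0 \<le> integral S w" using i1 w0 by (intro integral_nonneg) auto
  have key: "I \<le> J / (p * c powr (p - 1)) + c * (1 - 1 / p)" if c: "0 < c" for c
  proof -
    define K where "K = p * c powr (p - 1)"
    have K0: "0 < K" unfolding K_def using p c by auto
    have pt: "w s * g s \<le> (w s * g s powr p) / K + c * (1 - 1 / p) * w s" if "s \<in> S" for s
    proof -
      have "g s \<le> g s powr p / K + c * (1 - 1 / p)"
        unfolding K_def by (rule young_pt) (use p c g0 that in auto)
      then have "w s * g s \<le> w s * (g s powr p / K + c * (1 - 1 / p))"
        using w0 that by (intro mult_left_mono) auto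
      then show ?thesis by (simp add: algebra_simps)
    qed
    have "I \<le> integral S (\<lambda>s. (w s * g s powr p) / K + c * (1 - 1 / p) * w s)"
      unfolding I_def using pt i1 i2 i3
      by (intro integral_le) (auto intro!: integrable_add integrable_on_divide integrable_on_mult_right)
    also have "\<dots> = J / K + c * (1 - 1 / p) * integral S w"
    proof -
      have "integral S (\<lambda>s. (w s * g s powr p) / K + c * (1 - 1 / p) * w s)
          = integral S (\<lambda>s. (w s * g s powr p) / K) + integral S (\<lambda>s. c * (1 - 1 / p) * w s)"
        by (rule integral_add) (use i1 i3 in \<open>auto intro: integrable_on_divide integrable_on_mult_right\<close>)
      also have "integral S (\<lambda>s. (w s * g s powr p) / K) = J / K"
        unfolding J_def divide_inverse by (rule integral_mult_left)
      also have "integral S (\<lambda>s. c * (1 - 1 / p) * w s) = c * (1 - 1 / p) * integral S w"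
        by (rule integral_mult_right)
      finally show ?thesis .
    qed
    also have "\<dots> \<le> J / K + c * (1 - 1 / p)"
      using w1 c p by (intro add_left_mono mult_left_le) (auto simp: field_simps)
    finally show ?thesis unfolding K_def .
  qed
  show ?thesis
  proof (cases "J = 0")
    case True
    have "I \<le> 0"
    proof (rule field_le_epsilon)
      fix e :: real assume e: "0 < e"
      have "I \<le> J / (p * e powr (p - 1)) + e * (1 - 1 / p)" by (rule key[OF e])
      also have "\<dots> \<le> 0 + e" using True e p by (auto simp: field_simps)
      finally show "I \<le> 0 + e" .
    qed
    then have "I = 0" using I0 by simp
    then show ?thesis using True p unfolding I_def[symmetric] J_def[symmetric] by simp
  next
    case False
    then have Jp: "0 < J" using J0 by simp
    define c where "c = J powr (1 / p)"
    have c0: "0 < c" unfolding c_def using Jp by simp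
    have "c powr (p - 1) = J powr ((p - 1) / p)" unfolding c_def using Jp by (simp add: powr_powr)
    also have "\<dots> = J / c" unfolding c_def using Jp p
      by (simp add: powr_diff diff_divide_distrib)
    finally have cp: "c powr (p - 1) = J / c" .
    have "I \<le> J / (p * c powr (p - 1)) + c * (1 - 1 / p)" by (rule key[OF c0])
    also have "\<dots> = c" unfolding cp using Jp c0 p by (simp add: field_simps)
    finally have "I \<le> c" .
    then have "I powr p \<le> c powr p" using I0 p by (intro powr_mono2) auto
    also have "c powr p = J" unfolding c_def using Jp p by (simp add: powr_powr)
    finally show ?thesis unfolding I_def J_def .
  qed
qed

lemma b_cont:
  fixes b :: "real^'n \<Rightarrow> real \<Rightarrow> real^'n"
  assumes Lb: "\<forall>x y s t. 0 \<le> s \<longrightarrow> 0 \<le> t \<longrightarrow> norm (b y s - b x t) \<le> L * (norm (y - x) + \<bar>s - t\<bar>)"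
    and L0: "0 \<le> L"
  shows "continuous_on (UNIV \<times> {0..}) (\<lambda>z. b (fst z) (snd z))"
proof (rule lipschitz_on_continuous_on[where L="2 * L"], rule lipschitz_onI)
  fix z1 z2 :: "(real^'n) \<times> real" assume z: "z1 \<in> UNIV \<times> {0..}" "z2 \<in> UNIV \<times> {0..}"
  obtain y s x t where e: "z1 = (y, s)" "z2 = (x, t)" by (cases z1, cases z2) auto
  have n1: "norm (y - x) \<le> dist z1 z2" unfolding e dist_norm
    using norm_fst_le[of "y - x" "s - t"] by simp
  have n2: "\<bar>s - t\<bar> \<le> dist z1 z2" unfolding e dist_norm
    using norm_snd_le[of "s - t" "y - x"] by simp
  have "dist (b (fst z1) (snd z1)) (b (fst z2) (snd z2)) = norm (b y s - b x t)"
    by (simp add: e dist_norm)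
  also have "\<dots> \<le> L * (norm (y - x) + \<bar>s - t\<bar>)" using Lb z e by auto
  also have "\<dots> \<le> L * (2 * dist z1 z2)" using n1 n2 L0
    by (intro mult_left_mono) auto
  also have "\<dots> = 2 * L * dist z1 z2" by simp
  finally show "dist (b (fst z1) (snd z1)) (b (fst z2) (snd z2)) \<le> 2 * L * dist z1 z2" .
qed (use L0 in simp)

lemma pathwise:
  fixes v wv xx :: "real \<Rightarrow> real^'n" and b :: "real^'n \<Rightarrow> real \<Rightarrow> real^'n"
  assumes eps: "0 < \<epsilon>" and T: "0 \<le> T" and c0: "0 \<le> c"
    and Bb: "\<forall>x t. 0 \<le> t \<longrightarrow> norm (b x t) \<le> B"
    and bc: "continuous_on (UNIV \<times> {0..}) (\<lambda>z. b (fst z) (snd z))"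
    and cv: "continuous_on {0..} v" and cw: "continuous_on {0..} wv" and w0: "wv 0 = 0"
    and X: "\<forall>t\<ge>0. xx t = x0 + integral {0..t} v"
    and V: "\<forall>t\<ge>0. v t = v 0 + integral {0..t} (\<lambda>s. (1 / \<epsilon>) *\<^sub>R (b (xx s) s - v s)) + c *\<^sub>R wv t"
  shows "norm (v T) \<le> norm (v 0) + B + c * exp (- T / \<epsilon>) * norm (wv T)
           + c * integral {0..T} (\<lambda>s. exp ((s - T) / \<epsilon>) / \<epsilon> * norm (wv T - wv s))"
proof -
  let ?S = "{0..T}"
  have cvT: "continuous_on ?S v" using cv by (rule continuous_on_subset) auto
  have cwT: "continuous_on ?S wv" using cw by (rule continuous_on_subset) auto
  have cxx: "continuous_on ?S xx"
  proof -
    have "continuous_on ?S (\<lambda>t. x0 + integral {0..t} v)"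
      by (intro continuous_intros indefinite_integral_continuous_1 integrable_continuous_interval cvT)
    then show ?thesis by (rule continuous_on_eq) (use X in auto)
  qed
  define \<beta> where "\<beta> s = b (xx s) s" for s
  have c\<beta>: "continuous_on ?S \<beta>"
  proof -
    have "continuous_on ?S (\<lambda>s. (xx s, s))" by (intro continuous_intros cxx)
    moreover have "(\<lambda>s. (xx s, s)) ` ?S \<subseteq> UNIV \<times> {0..}" by auto
    ultimately have "continuous_on ?S ((\<lambda>z. b (fst z) (snd z)) \<circ> (\<lambda>s. (xx s, s)))"
      by (intro continuous_on_compose continuous_on_subset[OF bc])
    then show ?thesis by (simp add: \<beta>_def o_def)
  qed
  have \<beta>B: "norm (\<beta> s) \<le> B" if "s \<in> ?S" for s using Bb that by (auto simp: \<beta>_def)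
  define \<phi> where "\<phi> s = (1 / \<epsilon>) *\<^sub>R (\<beta> s - v s)" for s
  have c\<phi>: "continuous_on ?S \<phi>" unfolding \<phi>_def by (intro continuous_intros c\<beta> cvT)
  define \<psi> where "\<psi> s = v s - c *\<^sub>R wv s" for s
  have \<psi>eq: "\<psi> s = v 0 + integral {0..s} \<phi>" if "s \<in> ?S" for s
  proof -
    have "v s = v 0 + integral {0..s} (\<lambda>s. (1 / \<epsilon>) *\<^sub>R (b (xx s) s - v s)) + c *\<^sub>R wv s"
      using V[rule_format, of s] that by simp
    then show ?thesis unfolding \<psi>_def \<phi>_def \<beta>_def by (simp add: algebra_simps)
  qed
  have \<psi>0: "\<psi> 0 = v 0" by (simp add: \<psi>_def w0)
  have d\<psi>: "(\<psi> has_vector_derivative \<phi> s) (at s within ?S)" if "s \<in> ?S" for s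
  proof (rule has_vector_derivative_transform[OF that])
    show "\<And>x. x \<in> ?S \<Longrightarrow> \<psi> x = v 0 + integral {0..x} \<phi>" by (rule \<psi>eq)
    show "((\<lambda>x. v 0 + integral {0..x} \<phi>) has_vector_derivative \<phi> s) (at s within ?S)"
      using integral_has_vector_derivative[OF c\<phi> that]
      by (auto intro!: derivative_eq_intros)
  qed
  define Z where "Z s = exp (s / \<epsilon>) *\<^sub>R \<psi> s" for s
  define h0 where "h0 s = (exp (s / \<epsilon>) / \<epsilon>) *\<^sub>R (\<beta> s - c *\<^sub>R wv s)" for s
  have dZ: "(Z has_vector_derivative h0 s) (at s within ?S)" if "s \<in> ?S" for s
  proof -
    have e: "((\<lambda>s. exp (s / \<epsilon>)) has_field_derivative exp (s / \<epsilon>) * (1 / \<epsilon>)) (at s within ?S)"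
      using eps by (auto intro!: derivative_eq_intros)
    have "(Z has_vector_derivative (exp (s / \<epsilon>) *\<^sub>R \<phi> s + (exp (s / \<epsilon>) * (1 / \<epsilon>)) *\<^sub>R \<psi> s)) (at s within ?S)"
      unfolding Z_def by (rule has_vector_derivative_scaleR[OF e d\<psi>[OF that]])
    moreover have "exp (s / \<epsilon>) *\<^sub>R \<phi> s + (exp (s / \<epsilon>) * (1 / \<epsilon>)) *\<^sub>R \<psi> s = h0 s"
      unfolding h0_def \<phi>_def \<psi>_def by (simp add: algebra_simps)
    ultimately show ?thesis by simp
  qed
  have I0: "(h0 has_integral (Z T - Z 0)) ?S"
    by (rule fundamental_theorem_of_calculus[OF T dZ])
  have Ie: "((\<lambda>s. exp (s / \<epsilon>) / \<epsilon>) has_integral (exp (T / \<epsilon>) - 1)) ?S"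
  proof -
    have "((\<lambda>s. exp (s / \<epsilon>) / \<epsilon>) has_integral (exp (T / \<epsilon>) - exp (0 / \<epsilon>))) ?S"
    proof (rule fundamental_theorem_of_calculus[OF T])
      fix s assume "s \<in> ?S"
      have "((\<lambda>s. exp (s / \<epsilon>)) has_real_derivative exp (s / \<epsilon>) / \<epsilon>) (at s within ?S)"
        using eps by (auto intro!: derivative_eq_intros)
      then show "((\<lambda>s. exp (s / \<epsilon>)) has_vector_derivative exp (s / \<epsilon>) / \<epsilon>) (at s within ?S)"
        by (simp add: has_real_derivative_iff_has_vector_derivative)
    qed
    then show ?thesis by simp
  qed
  define g where "g s = norm (wv T - wv s)" for s
  define h where "h s = (exp (s / \<epsilon>) / \<epsilon>) *\<^sub>R (\<beta> s + c *\<^sub>R (wv T - wv s))" for s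
  have hI: "(h has_integral ((Z T - Z 0) + (exp (T / \<epsilon>) - 1) *\<^sub>R (c *\<^sub>R wv T))) ?S"
  proof -
    have "((\<lambda>s. h0 s + (exp (s / \<epsilon>) / \<epsilon>) *\<^sub>R (c *\<^sub>R wv T)) has_integral
            ((Z T - Z 0) + (exp (T / \<epsilon>) - 1) *\<^sub>R (c *\<^sub>R wv T))) ?S"
      by (intro has_integral_add I0 has_integral_scaleR_left Ie)
    moreover have "(\<lambda>s. h0 s + (exp (s / \<epsilon>) / \<epsilon>) *\<^sub>R (c *\<^sub>R wv T)) = h"
      unfolding h0_def h_def by (auto simp: fun_eq_iff algebra_simps)
    ultimately show ?thesis by simp
  qed
  define E where "E = exp (T / \<epsilon>)"
  have E1: "1 \<le> E" unfolding E_def using T eps by simp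
  have ZT: "Z T = E *\<^sub>R v T - E *\<^sub>R (c *\<^sub>R wv T)" unfolding Z_def \<psi>_def E_def by (simp add: algebra_simps)
  have Z0: "Z 0 = v 0" unfolding Z_def using \<psi>0 by simp
  have main: "E *\<^sub>R v T = v 0 + integral ?S h + c *\<^sub>R wv T"
    using integral_unique[OF hI] ZT Z0 unfolding E_def by (simp add: algebra_simps)
  have cg: "continuous_on ?S g" unfolding g_def by (intro continuous_intros cwT)
  have ch: "continuous_on ?S h" unfolding h_def using eps by (auto intro!: continuous_intros c\<beta> cwT)
  define k where "k s = exp (s / \<epsilon>) / \<epsilon> * (B + c * g s)" for s
  have ck: "continuous_on ?S k" unfolding k_def using eps by (auto intro!: continuous_intros cg)
  have nh: "norm (integral ?S h) \<le> integral ?S k"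
  proof (rule integral_norm_bound_integral)
    show "h integrable_on ?S" by (rule integrable_continuous_interval[OF ch])
    show "k integrable_on ?S" by (rule integrable_continuous_interval[OF ck])
    fix s assume s: "s \<in> ?S"
    have "norm (\<beta> s + c *\<^sub>R (wv T - wv s)) \<le> norm (\<beta> s) + norm (c *\<^sub>R (wv T - wv s))"
      by (rule norm_triangle_ineq)
    also have "\<dots> \<le> B + c * g s" using \<beta>B[OF s] c0 by (simp add: g_def)
    finally have "norm (\<beta> s + c *\<^sub>R (wv T - wv s)) \<le> B + c * g s" .
    then have "exp (s / \<epsilon>) / \<epsilon> * norm (\<beta> s + c *\<^sub>R (wv T - wv s)) \<le> exp (s / \<epsilon>) / \<epsilon> * (B + c * g s)"
      using eps by (intro mult_left_mono) auto
    then show "norm (h s) \<le> k s" unfolding h_def k_def using eps by simp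
  qed
  define Iw where "Iw = integral ?S (\<lambda>s. exp (s / \<epsilon>) / \<epsilon> * g s)"
  have cIw: "continuous_on ?S (\<lambda>s. exp (s / \<epsilon>) / \<epsilon> * g s)" using eps by (auto intro!: continuous_intros cg)
  have kI: "integral ?S k = B * (E - 1) + c * Iw"
  proof -
    have "integral ?S k = integral ?S (\<lambda>s. exp (s / \<epsilon>) / \<epsilon> * B + c * (exp (s / \<epsilon>) / \<epsilon> * g s))"
      unfolding k_def by (rule integral_cong) (simp add: algebra_simps add_divide_distrib)
    also have "\<dots> = integral ?S (\<lambda>s. exp (s / \<epsilon>) / \<epsilon> * B) + integral ?S (\<lambda>s. c * (exp (s / \<epsilon>) / \<epsilon> * g s))"
      using eps by (intro integral_add integrable_continuous_interval) (auto intro!: continuous_intros cg)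
    also have "integral ?S (\<lambda>s. exp (s / \<epsilon>) / \<epsilon> * B) = (E - 1) * B"
      unfolding E_def by (simp only: integral_mult_left integral_unique[OF Ie])
    also have "integral ?S (\<lambda>s. c * (exp (s / \<epsilon>) / \<epsilon> * g s)) = c * Iw"
      unfolding Iw_def by simp
    finally show ?thesis by simp
  qed
  have "E * norm (v T) = norm (E *\<^sub>R v T)" using E1 by simp
  also have "\<dots> \<le> norm (v 0) + norm (integral ?S h) + norm (c *\<^sub>R wv T)"
    unfolding main using norm_triangle_ineq[of "v 0 + integral ?S h" "c *\<^sub>R wv T"]
      norm_triangle_ineq[of "v 0" "integral ?S h"] by linarith
  also have "\<dots> \<le> norm (v 0) + (B * (E - 1) + c * Iw) + c * norm (wv T)"
    using nh kI c0 by simp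
  finally have ineq: "E * norm (v T) \<le> norm (v 0) + B * (E - 1) + c * Iw + c * norm (wv T)" by simp
  have Iw0: "0 \<le> Iw" unfolding Iw_def using integrable_continuous_interval[OF cIw] eps
    by (intro integral_nonneg) (auto simp: g_def)
  have B0: "0 \<le> B" using Bb order_trans[OF norm_ge_zero] by blast
  have "norm (v T) \<le> (norm (v 0) + B * (E - 1) + c * Iw + c * norm (wv T)) / E"
    using ineq E1 by (simp add: field_simps)
  also have "\<dots> = norm (v 0) / E + B * (1 - 1 / E) + c * (Iw / E) + c * (norm (wv T) / E)"
    using E1 by (simp add: field_simps)
  also have "\<dots> \<le> norm (v 0) + B + c * (Iw / E) + c * (norm (wv T) / E)"
  proof -
    have "norm (v 0) / E \<le> norm (v 0)" using E1 by (simp add: divide_le_eq mult_le_cancel_left1)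
    moreover have "B * (1 - 1 / E) \<le> B" using E1 B0 by (simp add: mult_left_le)
    ultimately show ?thesis by linarith
  qed
  also have "Iw / E = integral ?S (\<lambda>s. exp ((s - T) / \<epsilon>) / \<epsilon> * norm (wv T - wv s))"
  proof -
    have "Iw / E = integral ?S (\<lambda>s. exp (s / \<epsilon>) / \<epsilon> * g s * (1 / E))"
      unfolding Iw_def by simp
    also have "\<dots> = integral ?S (\<lambda>s. exp ((s - T) / \<epsilon>) / \<epsilon> * norm (wv T - wv s))"
      unfolding E_def g_def
      by (intro integral_cong) (simp add: diff_divide_distrib exp_diff field_simps)
    finally show ?thesis .
  qed
  also have "norm (wv T) / E = exp (- T / \<epsilon>) * norm (wv T)"
    unfolding E_def by (simp add: exp_minus field_simps)
  finally show ?thesis by (simp add: algebra_simps)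
qed

lemma normal_abs_moment:
  fixes \<sigma> p :: real
  assumes s: "0 < \<sigma>" and p: "0 \<le> p" "p \<le> real (2 * k)"
  shows "(\<integral>\<^sup>+x. ennreal (normal_density 0 \<sigma> x) * ennreal (\<bar>x\<bar> powr p) \<partial>lborel)
          \<le> ennreal (\<sigma> powr p * (1 + fact (2 * k) / (2 ^ k * fact k)))"
proof -
  define K :: real where "K = fact (2 * k) / ((2 / \<sigma>\<^sup>2) ^ k * fact k)"
  have h0: "has_bochner_integral lborel (\<lambda>x. normal_density 0 \<sigma> x * (x - 0) ^ (2 * 0)) (fact (2 * 0) / ((2 / \<sigma>\<^sup>2)^0 * fact 0))"
    using s by (rule normal_moment_even)
  have hk: "has_bochner_integral lborel (\<lambda>x. normal_density 0 \<sigma> x * (x - 0) ^ (2 * k)) K"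
    unfolding K_def using s by (rule normal_moment_even)
  have h: "has_bochner_integral lborel
     (\<lambda>x. \<sigma> powr p * (normal_density 0 \<sigma> x + (1 / \<sigma> ^ (2 * k)) * (normal_density 0 \<sigma> x * x ^ (2 * k))))
     (\<sigma> powr p * (1 + (1 / \<sigma> ^ (2 * k)) * K))"
    using h0 hk by (intro has_bochner_integral_mult_right has_bochner_integral_add) auto
  have eqK: "(1 / \<sigma> ^ (2 * k)) * K = fact (2 * k) / (2 ^ k * fact k)"
  proof -
    have "(2 / \<sigma>\<^sup>2) ^ k * \<sigma> ^ (2 * k) = 2 ^ k"
      using s by (simp add: power_mult power_divide)
    then show ?thesis unfolding K_def using s by (simp add: field_simps)
  qed
  have pt: "ennreal (normal_density 0 \<sigma> x) * ennreal (\<bar>x\<bar> powr p)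
      \<le> ennreal (\<sigma> powr p * (normal_density 0 \<sigma> x + (1 / \<sigma> ^ (2 * k)) * (normal_density 0 \<sigma> x * x ^ (2 * k))))" for x
  proof -
    have "\<bar>x\<bar> powr p = \<sigma> powr p * \<bar>x / \<sigma>\<bar> powr p"
      using s by (simp add: abs_divide powr_divide)
    also have "\<dots> \<le> \<sigma> powr p * (1 + (x / \<sigma>) ^ (2 * k))"
      by (intro mult_left_mono abs_powr_le_even p) auto
    finally have "\<bar>x\<bar> powr p \<le> \<sigma> powr p * (1 + (x / \<sigma>) ^ (2 * k))" .
    then have "normal_density 0 \<sigma> x * \<bar>x\<bar> powr p \<le> normal_density 0 \<sigma> x * (\<sigma> powr p * (1 + (x / \<sigma>) ^ (2 * k)))"
      by (intro mult_left_mono normal_density_nonneg)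
    also have "\<dots> = \<sigma> powr p * (normal_density 0 \<sigma> x + (1 / \<sigma> ^ (2 * k)) * (normal_density 0 \<sigma> x * x ^ (2 * k)))"
      by (simp add: power_divide field_simps)
    finally show ?thesis
      by (simp add: ennreal_mult'[symmetric] normal_density_nonneg)
  qed
  have "(\<integral>\<^sup>+x. ennreal (normal_density 0 \<sigma> x) * ennreal (\<bar>x\<bar> powr p) \<partial>lborel)
     \<le> (\<integral>\<^sup>+x. ennreal (\<sigma> powr p * (normal_density 0 \<sigma> x + (1 / \<sigma> ^ (2 * k)) * (normal_density 0 \<sigma> x * x ^ (2 * k)))) \<partial>lborel)"
    by (intro nn_integral_mono pt)
  also have "\<dots> = ennreal (\<sigma> powr p * (1 + (1 / \<sigma> ^ (2 * k)) * K))"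
  proof -
    have "(\<integral>\<^sup>+x. ennreal (\<sigma> powr p * (normal_density 0 \<sigma> x + (1 / \<sigma> ^ (2 * k)) * (normal_density 0 \<sigma> x * x ^ (2 * k)))) \<partial>lborel)
        = ennreal (integral\<^sup>L lborel (\<lambda>x. \<sigma> powr p * (normal_density 0 \<sigma> x + (1 / \<sigma> ^ (2 * k)) * (normal_density 0 \<sigma> x * x ^ (2 * k)))))"
    proof (rule nn_integral_eq_integral[OF integrable.intros[OF h]], rule AE_I2)
      fix x :: real
      have "0 \<le> x ^ (2 * k)" by (simp add: power_mult)
      then show "0 \<le> \<sigma> powr p * (normal_density 0 \<sigma> x + (1 / \<sigma> ^ (2 * k)) * (normal_density 0 \<sigma> x * x ^ (2 * k)))"
        using s by (intro mult_nonneg_nonneg add_nonneg_nonneg normal_density_nonneg) auto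
    qed
    then show ?thesis by (simp only: has_bochner_integral_integral_eq[OF h])
  qed
  finally show ?thesis unfolding eqK .
qed

lemma BM_incr_moment:
  fixes W :: "real \<Rightarrow> 'a \<Rightarrow> real^'n"
  assumes BM: "std_BM M W" and st: "s < t" and s0: "0 \<le> s" and p: "0 < p" "p \<le> real (2 * k)"
  shows "(\<integral>\<^sup>+\<omega>. ennreal (norm (W t \<omega> - W s \<omega>) powr p) \<partial>M)
          \<le> ennreal (real CARD('n) powr p * real CARD('n) * (1 + fact (2 * k) / (2 ^ k * fact k)) * (t - s) powr (p / 2))"
proof -
  define K0 :: real where "K0 = 1 + fact (2 * k) / (2 ^ k * fact k)"
  define \<sigma> where "\<sigma> = sqrt (t - s)"
  have sg0: "0 < \<sigma>" unfolding \<sigma>_def using st by simp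
  have sp: "\<sigma> powr p = (t - s) powr (p / 2)"
    unfolding \<sigma>_def using st by (simp add: powr_half_sqrt[symmetric] powr_powr)
  have K00: "0 \<le> K0" unfolding K0_def by (simp add: add_nonneg_nonneg)
  have meas[measurable]: "\<And>r. W r \<in> borel_measurable M" using BM unfolding std_BM_def by blast
  have dist: "\<And>i. distributed M lborel (\<lambda>\<omega>. (W t \<omega> - W s \<omega>) $ i) (normal_density 0 \<sigma>)"
    using BM st s0 unfolding std_BM_def \<sigma>_def by auto
  have comp: "(\<integral>\<^sup>+\<omega>. ennreal (\<bar>(W t \<omega> - W s \<omega>) $ i\<bar> powr p) \<partial>M) \<le> ennreal (\<sigma> powr p * K0)" for i
  proof -
    have "(\<integral>\<^sup>+\<omega>. ennreal (\<bar>(W t \<omega> - W s \<omega>) $ i\<bar> powr p) \<partial>M)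
        = (\<integral>\<^sup>+x. ennreal (normal_density 0 \<sigma> x) * ennreal (\<bar>x\<bar> powr p) \<partial>lborel)"
      by (rule distributed_nn_integral[OF dist, symmetric]) measurable
    also have "\<dots> \<le> ennreal (\<sigma> powr p * K0)"
      unfolding K0_def by (rule normal_abs_moment[OF sg0]) (use p in auto)
    finally show ?thesis .
  qed
  have pt: "ennreal (norm (W t \<omega> - W s \<omega>) powr p)
      \<le> ennreal (real CARD('n) powr p) * (\<Sum>i\<in>UNIV. ennreal (\<bar>(W t \<omega> - W s \<omega>) $ i\<bar> powr p))" for \<omega>
  proof -
    let ?v = "W t \<omega> - W s \<omega>"
    have "norm ?v powr p \<le> (\<Sum>i\<in>UNIV. \<bar>?v $ i\<bar>) powr p"
      using p by (intro powr_mono2 norm_le_l1_cart) auto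
    also have "\<dots> \<le> real (card (UNIV :: 'n set)) powr p * (\<Sum>i\<in>UNIV. \<bar>?v $ i\<bar> powr p)"
      by (rule sum_powr_le) (use p in auto)
    finally have "norm ?v powr p \<le> real CARD('n) powr p * (\<Sum>i\<in>UNIV. \<bar>?v $ i\<bar> powr p)" .
    then have "ennreal (norm ?v powr p) \<le> ennreal (real CARD('n) powr p * (\<Sum>i\<in>UNIV. \<bar>?v $ i\<bar> powr p))"
      by (rule ennreal_leI)
    also have "\<dots> = ennreal (real CARD('n) powr p) * (\<Sum>i\<in>UNIV. ennreal (\<bar>?v $ i\<bar> powr p))"
      by (simp add: ennreal_mult sum_nonneg)
    finally show ?thesis .
  qed
  have "(\<integral>\<^sup>+\<omega>. ennreal (norm (W t \<omega> - W s \<omega>) powr p) \<partial>M)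
      \<le> (\<integral>\<^sup>+\<omega>. ennreal (real CARD('n) powr p) * (\<Sum>i\<in>UNIV. ennreal (\<bar>(W t \<omega> - W s \<omega>) $ i\<bar> powr p)) \<partial>M)"
    by (intro nn_integral_mono pt)
  also have "\<dots> = ennreal (real CARD('n) powr p) * (\<Sum>i\<in>UNIV. (\<integral>\<^sup>+\<omega>. ennreal (\<bar>(W t \<omega> - W s \<omega>) $ i\<bar> powr p) \<partial>M))"
  proof -
    have m: "(\<lambda>\<omega>. \<Sum>i\<in>UNIV. ennreal (\<bar>(W t \<omega> - W s \<omega>) $ i\<bar> powr p)) \<in> borel_measurable M"
      by measurable
    have "(\<integral>\<^sup>+\<omega>. (\<Sum>i\<in>UNIV. ennreal (\<bar>(W t \<omega> - W s \<omega>) $ i\<bar> powr p)) \<partial>M)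
        = (\<Sum>i\<in>UNIV. (\<integral>\<^sup>+\<omega>. ennreal (\<bar>(W t \<omega> - W s \<omega>) $ i\<bar> powr p) \<partial>M))"
      by (rule nn_integral_sum) measurable
    with nn_integral_cmult[OF m, of "ennreal (real CARD('n) powr p)"] show ?thesis by simp
  qed
  also have "\<dots> \<le> ennreal (real CARD('n) powr p) * (\<Sum>i\<in>(UNIV::'n set). ennreal (\<sigma> powr p * K0))"
    by (intro mult_left_mono sum_mono comp) auto
  also have "\<dots> = ennreal (real CARD('n) powr p * real CARD('n) * K0 * (t - s) powr (p / 2))"
    using K00 by (simp add: sp ennreal_mult[symmetric] ennreal_of_nat_eq_real_of_nat mult_ac)
  finally show ?thesis unfolding K0_def .
qed

lemma floor_approx_tendsto:
  fixes s :: real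
  shows "(\<lambda>k::nat. real_of_int \<lfloor>s * real (Suc k)\<rfloor> / real (Suc k)) \<longlonglongrightarrow> s"
proof (rule tendsto_sandwich[where f="\<lambda>k. s - 1 / real (Suc k)" and h="\<lambda>k. s"])
  show "\<forall>\<^sub>F k in sequentially. s - 1 / real (Suc k) \<le> real_of_int \<lfloor>s * real (Suc k)\<rfloor> / real (Suc k)"
  proof (rule always_eventually, rule allI)
    fix k :: nat
    have "s * real (Suc k) - 1 \<le> real_of_int \<lfloor>s * real (Suc k)\<rfloor>" by linarith
    then have "(s * real (Suc k) - 1) / real (Suc k) \<le> real_of_int \<lfloor>s * real (Suc k)\<rfloor> / real (Suc k)"
      by (rule divide_right_mono) simp
    moreover have "(s * real (Suc k) - 1) / real (Suc k) = s - 1 / real (Suc k)"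
      by (simp add: diff_divide_distrib)
    ultimately show "s - 1 / real (Suc k) \<le> real_of_int \<lfloor>s * real (Suc k)\<rfloor> / real (Suc k)"
      by simp
  qed
  show "\<forall>\<^sub>F k in sequentially. real_of_int \<lfloor>s * real (Suc k)\<rfloor> / real (Suc k) \<le> s"
  proof (rule always_eventually, rule allI)
    fix k :: nat
    have "real_of_int \<lfloor>s * real (Suc k)\<rfloor> \<le> s * real (Suc k)" by linarith
    then have "real_of_int \<lfloor>s * real (Suc k)\<rfloor> / real (Suc k) \<le> s * real (Suc k) / real (Suc k)"
      by (rule divide_right_mono) simp
    then show "real_of_int \<lfloor>s * real (Suc k)\<rfloor> / real (Suc k) \<le> s"
      by simp
  qed
  show "(\<lambda>k. s - 1 / real (Suc k)) \<longlonglongrightarrow> s"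
    using LIMSEQ_Suc[OF tendsto_diff[OF tendsto_const[of s] lim_inverse_n']] by (simp add: divide_inverse)
qed simp

lemma joint_meas:
  fixes W' :: "real \<Rightarrow> 'a \<Rightarrow> real^'n"
  assumes meas: "\<And>r. W' r \<in> borel_measurable M"
    and cont: "\<And>\<omega>. \<omega> \<in> space M \<Longrightarrow> continuous_on {0..} (\<lambda>r. W' r \<omega>)"
    and t: "0 \<le> t"
  shows "(\<lambda>z. W' (max 0 (min t (snd z))) (fst z)) \<in> borel_measurable (M \<Otimes>\<^sub>M lborel)"
proof (rule borel_measurable_LIMSEQ_metric)
  let ?r = "\<lambda>k (s::real). real_of_int \<lfloor>s * real (Suc k)\<rfloor> / real (Suc k)"
  fix k :: nat
  show "(\<lambda>z. W' (max 0 (min t (?r k (snd z)))) (fst z)) \<in> borel_measurable (M \<Otimes>\<^sub>M lborel)"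
  proof (rule measurable_compose_countable[where f="\<lambda>(i::int) z. W' (max 0 (min t (real_of_int i / real (Suc k)))) (fst z)"
        and g="\<lambda>z. \<lfloor>snd z * real (Suc k)\<rfloor>"])
    fix i :: int
    show "(\<lambda>z. W' (max 0 (min t (real_of_int i / real (Suc k)))) (fst z)) \<in> borel_measurable (M \<Otimes>\<^sub>M lborel)"
      using meas by measurable
  next
    show "(\<lambda>z. \<lfloor>snd z * real (Suc k)\<rfloor>) \<in> measurable (M \<Otimes>\<^sub>M lborel) (count_space UNIV)"
      by measurable
  qed
next
  let ?r = "\<lambda>k (s::real). real_of_int \<lfloor>s * real (Suc k)\<rfloor> / real (Suc k)"
  fix z :: "'a \<times> real" assume z: "z \<in> space (M \<Otimes>\<^sub>M lborel)"
  then have \<omega>: "fst z \<in> space M" by (auto simp: space_pair_measure)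
  have "(\<lambda>k. max 0 (min t (?r k (snd z)))) \<longlonglongrightarrow> max 0 (min t (snd z))"
    by (intro tendsto_intros floor_approx_tendsto)
  then show "(\<lambda>k. W' (max 0 (min t (?r k (snd z)))) (fst z)) \<longlonglongrightarrow> W' (max 0 (min t (snd z))) (fst z)"
    by (rule continuous_on_tendsto_compose[OF cont[OF \<omega>]]) auto
qed

lemma weight_bound:
  fixes s t \<epsilon> p :: real
  assumes "0 < \<epsilon>" "s \<le> t" "0 < p"
  shows "exp ((s - t) / \<epsilon>) / \<epsilon> * (t - s) powr (p / 2)
         \<le> p powr (p / 2) * \<epsilon> powr (p / 2) * (exp ((s - t) / (2 * \<epsilon>)) / \<epsilon>)"
proof -
  define u where "u = (t - s) / \<epsilon>"
  have u0: "0 \<le> u" unfolding u_def using assms by simp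
  have ts: "t - s = \<epsilon> * u" unfolding u_def using assms by simp
  have "(t - s) powr (p / 2) = \<epsilon> powr (p / 2) * u powr (p / 2)"
    unfolding ts using assms u0 by (simp add: powr_mult)
  moreover have "exp ((s - t) / \<epsilon>) = exp (- u / 2) * exp (- u / 2)"
    unfolding u_def by (simp add: exp_add[symmetric] field_simps)
  moreover have "exp ((s - t) / (2 * \<epsilon>)) = exp (- u / 2)"
    unfolding u_def using assms by (simp add: field_simps)
  moreover have "u powr (p / 2) * exp (- u / 2) \<le> (2 * (p / 2)) powr (p / 2)"
    by (rule powr_exp_bound) (use u0 assms in auto)
  ultimately show ?thesis
  proof -
    assume a1: "(t - s) powr (p / 2) = \<epsilon> powr (p / 2) * u powr (p / 2)"
      and a2: "exp ((s - t) / \<epsilon>) = exp (- u / 2) * exp (- u / 2)"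
      and a3: "exp ((s - t) / (2 * \<epsilon>)) = exp (- u / 2)"
      and a4: "u powr (p / 2) * exp (- u / 2) \<le> (2 * (p / 2)) powr (p / 2)"
    have "exp ((s - t) / \<epsilon>) / \<epsilon> * (t - s) powr (p / 2)
        = (u powr (p / 2) * exp (- u / 2)) * (\<epsilon> powr (p / 2) * exp (- u / 2) / \<epsilon>)"
      unfolding a1 a2 by (simp add: field_simps)
    also have "\<dots> \<le> p powr (p / 2) * (\<epsilon> powr (p / 2) * exp (- u / 2) / \<epsilon>)"
      using a4 assms by (intro mult_right_mono) auto
    finally show ?thesis unfolding a3 by (simp add: field_simps)
  qed
qed

lemma EJ_bound:
  fixes W W' :: "real \<Rightarrow> 'a \<Rightarrow> real^'n"
  assumes BM: "std_BM M W" and t: "0 < t" and eps: "0 < \<epsilon>" and p: "1 \<le> p" "p \<le> real (2 * k)"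
    and meas': "\<And>r. W' r \<in> borel_measurable M"
    and cont': "\<And>\<omega>. \<omega> \<in> space M \<Longrightarrow> continuous_on {0..} (\<lambda>r. W' r \<omega>)"
    and ae: "AE \<omega> in M. \<forall>r. W' r \<omega> = W r \<omega>"
  shows "(\<integral>\<^sup>+\<omega>. (\<integral>\<^sup>+s. ennreal (indicator {0..t} s * (exp ((s - t) / \<epsilon>) / \<epsilon> * norm (W' t \<omega> - W' s \<omega>) powr p)) \<partial>lborel) \<partial>M)
         \<le> ennreal (2 * (real CARD('n) powr p * real CARD('n) * (1 + fact (2 * k) / (2 ^ k * fact k))) * p powr (p / 2) * \<epsilon> powr (p / 2))"
proof -
  define Kn where "Kn = real CARD('n) powr p * real CARD('n) * (1 + fact (2 * k) / (2 ^ k * fact k))"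
  have Kn0: "0 \<le> Kn" unfolding Kn_def by (auto intro!: mult_nonneg_nonneg add_nonneg_nonneg)
  define C where "C = Kn * p powr (p / 2) * \<epsilon> powr (p / 2)"
  have C0: "0 \<le> C" unfolding C_def using Kn0 by auto
  have prob: "prob_space M" using BM unfolding std_BM_def by blast
  interpret psf: pair_sigma_finite M lborel
    using prob unfolding pair_sigma_finite_def
    by (auto intro: prob_space_imp_sigma_finite lborel.sigma_finite_measure_axioms)
  define F where "F \<omega> s = ennreal (indicator {0..t} s * (exp ((s - t) / \<epsilon>) / \<epsilon> * norm (W' t \<omega> - W' s \<omega>) powr p))" for \<omega> s
  have Feq: "F \<omega> s = ennreal (indicator {0..t} s * (exp ((s - t) / \<epsilon>) / \<epsilon> * norm (W' t \<omega> - W' (max 0 (min t s)) \<omega>) powr p))" for \<omega> s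
    unfolding F_def by (cases "s \<in> {0..t}") (auto simp: indicator_def)
  have H[measurable]: "(\<lambda>z. W' (max 0 (min t (snd z))) (fst z)) \<in> borel_measurable (M \<Otimes>\<^sub>M lborel)"
    by (rule joint_meas[OF meas' cont']) (use t in auto)
  have [measurable]: "\<And>r. W' r \<in> borel_measurable M" by (rule meas')
  have Fm: "case_prod F \<in> borel_measurable (M \<Otimes>\<^sub>M lborel)"
    unfolding Feq[abs_def] split_beta' by measurable
  have inner: "(\<integral>\<^sup>+\<omega>. F \<omega> s \<partial>M) \<le> ennreal (indicator {0..t} s * (C * (exp ((s - t) / (2 * \<epsilon>)) / \<epsilon>)))" for s
  proof (cases "s \<in> {0..t}")
    case False
    then show ?thesis unfolding F_def by simp
  next
    case True
    define w where "w = exp ((s - t) / \<epsilon>) / \<epsilon>"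
    have w0: "0 \<le> w" unfolding w_def using eps by simp
    have "(\<integral>\<^sup>+\<omega>. F \<omega> s \<partial>M) = (\<integral>\<^sup>+\<omega>. ennreal w * ennreal (norm (W' t \<omega> - W' s \<omega>) powr p) \<partial>M)"
    proof (rule nn_integral_cong)
      fix \<omega>
      have "F \<omega> s = ennreal (w * norm (W' t \<omega> - W' s \<omega>) powr p)"
        unfolding F_def w_def using True by simp
      also have "\<dots> = ennreal w * ennreal (norm (W' t \<omega> - W' s \<omega>) powr p)"
        by (rule ennreal_mult[OF w0]) simp
      finally show "F \<omega> s = ennreal w * ennreal (norm (W' t \<omega> - W' s \<omega>) powr p)" .
    qed
    also have "\<dots> = ennreal w * (\<integral>\<^sup>+\<omega>. ennreal (norm (W' t \<omega> - W' s \<omega>) powr p) \<partial>M)"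
      by (rule nn_integral_cmult) measurable
    also have "(\<integral>\<^sup>+\<omega>. ennreal (norm (W' t \<omega> - W' s \<omega>) powr p) \<partial>M) = (\<integral>\<^sup>+\<omega>. ennreal (norm (W t \<omega> - W s \<omega>) powr p) \<partial>M)"
      by (rule nn_integral_cong_AE) (use ae in auto)
    also have "\<dots> \<le> ennreal (Kn * (t - s) powr (p / 2))"
    proof (cases "s = t")
      case True
      then show ?thesis using p by simp
    next
      case False
      then have "s < t" using \<open>s \<in> {0..t}\<close> by simp
      show ?thesis unfolding Kn_def
        by (rule BM_incr_moment[OF BM \<open>s < t\<close>]) (use True p in auto)
    qed
    finally have "(\<integral>\<^sup>+\<omega>. F \<omega> s \<partial>M) \<le> ennreal w * ennreal (Kn * (t - s) powr (p / 2))"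
      by (simp add: mult_left_mono)
    also have "\<dots> = ennreal (w * (Kn * (t - s) powr (p / 2)))" using w0 Kn0 by (simp add: ennreal_mult[symmetric])
    also have "\<dots> \<le> ennreal (C * (exp ((s - t) / (2 * \<epsilon>)) / \<epsilon>))"
    proof (rule ennreal_leI)
      have "w * (t - s) powr (p / 2) \<le> p powr (p / 2) * \<epsilon> powr (p / 2) * (exp ((s - t) / (2 * \<epsilon>)) / \<epsilon>)"
        unfolding w_def by (rule weight_bound) (use eps True p in auto)
      then have "Kn * (w * (t - s) powr (p / 2)) \<le> Kn * (p powr (p / 2) * \<epsilon> powr (p / 2) * (exp ((s - t) / (2 * \<epsilon>)) / \<epsilon>))"
        using Kn0 by (rule mult_left_mono)
      then show "w * (Kn * (t - s) powr (p / 2)) \<le> C * (exp ((s - t) / (2 * \<epsilon>)) / \<epsilon>)"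
        unfolding C_def by (simp add: mult_ac)
    qed
    finally show ?thesis using True by simp
  qed
  have G: "((\<lambda>s. C * (exp ((s - t) / (2 * \<epsilon>)) / \<epsilon>)) has_integral (2 * C - 2 * C * exp (- t / (2 * \<epsilon>)))) {0..t}"
  proof -
    have "((\<lambda>s. C * (exp ((s - t) / (2 * \<epsilon>)) / \<epsilon>)) has_integral
           (2 * C * exp ((t - t) / (2 * \<epsilon>)) - 2 * C * exp ((0 - t) / (2 * \<epsilon>)))) {0..t}"
    proof (rule fundamental_theorem_of_calculus)
      show "0 \<le> t" using t by simp
      fix s assume "s \<in> {0..t}"
      have "((\<lambda>s. 2 * C * exp ((s - t) / (2 * \<epsilon>))) has_real_derivative
              2 * C * (exp ((s - t) / (2 * \<epsilon>)) * (1 / (2 * \<epsilon>)))) (at s within {0..t})"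
        using eps by (auto intro!: derivative_eq_intros)
      moreover have "2 * C * (exp ((s - t) / (2 * \<epsilon>)) * (1 / (2 * \<epsilon>))) = C * (exp ((s - t) / (2 * \<epsilon>)) / \<epsilon>)"
        using eps by (simp add: field_simps)
      ultimately show "((\<lambda>s. 2 * C * exp ((s - t) / (2 * \<epsilon>))) has_vector_derivative
              C * (exp ((s - t) / (2 * \<epsilon>)) / \<epsilon>)) (at s within {0..t})"
        by (simp add: has_real_derivative_iff_has_vector_derivative)
    qed
    then show ?thesis by simp
  qed
  have "(\<integral>\<^sup>+\<omega>. (\<integral>\<^sup>+s. F \<omega> s \<partial>lborel) \<partial>M) = (\<integral>\<^sup>+s. (\<integral>\<^sup>+\<omega>. F \<omega> s \<partial>M) \<partial>lborel)"
    by (rule psf.Fubini'[OF Fm, symmetric])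
  also have "\<dots> \<le> (\<integral>\<^sup>+s. ennreal (indicator {0..t} s * (C * (exp ((s - t) / (2 * \<epsilon>)) / \<epsilon>))) \<partial>lborel)"
    by (intro nn_integral_mono inner)
  also have "\<dots> = ennreal (2 * C - 2 * C * exp (- t / (2 * \<epsilon>)))"
    by (rule nn_integral_has_integral_lebesgue[OF _ G]) (use C0 eps in auto)
  also have "\<dots> \<le> ennreal (2 * C)"
    using C0 by (intro ennreal_leI) auto
  finally show ?thesis unfolding F_def C_def Kn_def by (simp add: mult_ac)
qed

lemma pow4:
  fixes a b c d p :: real
  assumes "0 \<le> a" "0 \<le> b" "0 \<le> c" "0 \<le> d" "0 < p"
  shows "(a + b + c + d) powr p \<le> 4 powr p * (a powr p + b powr p + c powr p + d powr p)"
proof -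
  define M where "M = max (max a b) (max c d)"
  have M0: "0 \<le> M" unfolding M_def using assms by auto
  have "a + b + c + d \<le> 4 * M" unfolding M_def by linarith
  then have "(a + b + c + d) powr p \<le> (4 * M) powr p"
    using assms by (intro powr_mono2) auto
  also have "\<dots> = 4 powr p * M powr p" using M0 by (simp add: powr_mult)
  also have "M powr p \<le> a powr p + b powr p + c powr p + d powr p"
  proof -
    have "M = a \<or> M = b \<or> M = c \<or> M = d" unfolding M_def by linarith
    then have "M powr p = a powr p \<or> M powr p = b powr p \<or> M powr p = c powr p \<or> M powr p = d powr p"
      by auto
    moreover have "0 \<le> a powr p" "0 \<le> b powr p" "0 \<le> c powr p" "0 \<le> d powr p" by auto
    ultimately show ?thesis by linarith
  qed
  then have "4 powr p * M powr p \<le> 4 powr p * (a powr p + b powr p + c powr p + d powr p)"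
    by (intro mult_left_mono) auto
  finally show ?thesis .
qed

lemma pathwise_p:
  fixes v wv xx :: "real \<Rightarrow> real^'n" and b :: "real^'n \<Rightarrow> real \<Rightarrow> real^'n"
  assumes eps: "0 < \<epsilon>" and T: "0 < T" and c0: "0 \<le> c" and p: "1 < p"
    and Bb: "\<forall>x t. 0 \<le> t \<longrightarrow> norm (b x t) \<le> B"
    and bc: "continuous_on (UNIV \<times> {0..}) (\<lambda>z. b (fst z) (snd z))"
    and cv: "continuous_on {0..} v" and cw: "continuous_on {0..} wv" and w0: "wv 0 = 0"
    and X: "\<forall>t\<ge>0. xx t = x0 + integral {0..t} v"
    and V: "\<forall>t\<ge>0. v t = v 0 + integral {0..t} (\<lambda>s. (1 / \<epsilon>) *\<^sub>R (b (xx s) s - v s)) + c *\<^sub>R wv t"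
  shows "ennreal (norm (v T) powr p) \<le> ennreal (4 powr p) * (ennreal (norm (v 0) powr p) + ennreal (B powr p)
           + ennreal ((c * exp (- T / \<epsilon>) * norm (wv T)) powr p)
           + ennreal (c powr p) * (\<integral>\<^sup>+s. ennreal (indicator {0..T} s * (exp ((s - T) / \<epsilon>) / \<epsilon> * norm (wv T - wv s) powr p)) \<partial>lborel))"
proof -
  let ?S = "{0..T}"
  define w where "w s = exp ((s - T) / \<epsilon>) / \<epsilon>" for s
  define g where "g s = norm (wv T - wv s)" for s
  have B0: "0 \<le> B" using Bb order_trans[OF norm_ge_zero] by blast
  have cwT: "continuous_on ?S wv" using cw by (rule continuous_on_subset) auto
  have cg: "continuous_on ?S g" unfolding g_def by (intro continuous_intros cwT)
  have cw': "continuous_on ?S w" unfolding w_def using eps by (auto intro!: continuous_intros)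
  have cgp: "continuous_on ?S (\<lambda>s. g s powr p)"
    by (rule continuous_on_powr') (use cg p in \<open>auto simp: g_def\<close>)
  define I where "I = integral ?S (\<lambda>s. w s * g s)"
  define J where "J = integral ?S (\<lambda>s. w s * g s powr p)"
  have pw: "norm (v T) \<le> norm (v 0) + B + c * exp (- T / \<epsilon>) * norm (wv T) + c * I"
    unfolding I_def w_def g_def
    by (rule pathwise[OF eps _ c0 Bb bc cv cw w0 X V]) (use T in simp)
  have wI: "(w has_integral (1 - exp (- T / \<epsilon>))) ?S"
  proof -
    have "(w has_integral (exp ((T - T) / \<epsilon>) - exp ((0 - T) / \<epsilon>))) ?S"
    proof (rule fundamental_theorem_of_calculus)
      show "0 \<le> T" using T by simp
      fix s assume "s \<in> ?S"
      have "((\<lambda>s. exp ((s - T) / \<epsilon>)) has_real_derivative exp ((s - T) / \<epsilon>) * (1 / \<epsilon>)) (at s within ?S)"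
        using eps by (auto intro!: derivative_eq_intros)
      then show "((\<lambda>s. exp ((s - T) / \<epsilon>)) has_vector_derivative w s) (at s within ?S)"
        by (simp add: has_real_derivative_iff_has_vector_derivative w_def)
    qed
    then show ?thesis by simp
  qed
  have hol: "I powr p \<le> J"
    unfolding I_def J_def
  proof (rule holder_int[OF p])
    show "\<And>s. s \<in> ?S \<Longrightarrow> 0 \<le> w s" unfolding w_def using eps by simp
    show "\<And>s. s \<in> ?S \<Longrightarrow> 0 \<le> g s" unfolding g_def by simp
    show "w integrable_on ?S" using wI by blast
    show "(\<lambda>s. w s * g s) integrable_on ?S"
      by (intro integrable_continuous_interval continuous_intros cw' cg)
    show "(\<lambda>s. w s * g s powr p) integrable_on ?S"
      by (intro integrable_continuous_interval continuous_on_mult cw' cgp)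
    show "integral ?S w \<le> 1" using integral_unique[OF wI] by simp
  qed
  have I0: "0 \<le> I" unfolding I_def
    using integrable_continuous_interval[OF continuous_on_mult[OF cw' cg]] eps
    by (intro integral_nonneg) (auto simp: w_def g_def)
  have J0: "0 \<le> J" using I0 hol by (meson order_trans powr_ge_zero)
  have JN: "ennreal J = (\<integral>\<^sup>+s. ennreal (indicator ?S s * (w s * g s powr p)) \<partial>lborel)"
  proof -
    have "((\<lambda>s. w s * g s powr p) has_integral J) ?S"
      unfolding J_def by (intro integrable_integral integrable_continuous_interval continuous_on_mult cw' cgp)
    then show ?thesis
      by (intro nn_integral_has_integral_lebesgue[symmetric]) (use eps in \<open>auto simp: w_def\<close>)
  qed
  define a3 where "a3 = c * exp (- T / \<epsilon>) * norm (wv T)"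
  have a30: "0 \<le> a3" unfolding a3_def using c0 by simp
  have "norm (v T) powr p \<le> (norm (v 0) + B + a3 + c * I) powr p"
    using pw p unfolding a3_def by (intro powr_mono2) auto
  also have "\<dots> \<le> 4 powr p * (norm (v 0) powr p + B powr p + a3 powr p + (c * I) powr p)"
    by (rule pow4) (use B0 a30 c0 I0 p in auto)
  also have "(c * I) powr p \<le> c powr p * J"
    using c0 I0 hol by (simp add: powr_mult mult_left_mono)
  finally have "norm (v T) powr p \<le> 4 powr p * (norm (v 0) powr p + B powr p + a3 powr p + c powr p * J)"
    by (simp add: mult_left_mono)
  then have "ennreal (norm (v T) powr p) \<le> ennreal (4 powr p * (norm (v 0) powr p + B powr p + a3 powr p + c powr p * J))"
    by (rule ennreal_leI)
  also have "\<dots> = ennreal (4 powr p) * (ennreal (norm (v 0) powr p) + ennreal (B powr p) + ennreal (a3 powr p) + ennreal (c powr p) * ennreal J)"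
  proof -
    have "ennreal (c powr p) * ennreal J = ennreal (c powr p * J)" using J0 by (simp add: ennreal_mult)
    then show ?thesis using J0 by (simp add: ennreal_mult)
  qed
  finally show ?thesis unfolding JN a3_def w_def g_def .
qed

lemma csqrt_powr:
  assumes "0 < \<epsilon>"
  shows "sqrt (2 / \<epsilon>) powr p * \<epsilon> powr (p / 2) = 2 powr (p / 2)"
proof -
  have "sqrt (2 / \<epsilon>) powr p = (2 / \<epsilon>) powr (p / 2)"
    using assms by (simp add: powr_half_sqrt[symmetric] powr_powr)
  also have "\<dots> = 2 powr (p / 2) / \<epsilon> powr (p / 2)" using assms by (simp add: powr_divide)
  finally show ?thesis using assms by simp
qed

lemma V0_bound:
  fixes V0 :: "'a \<Rightarrow> real^'n"
  assumes prob: "prob_space M" and meas: "V0 \<in> borel_measurable M"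
    and Bx: "norm bx \<le> B" and p: "0 < p"
    and m: "(\<integral>\<^sup>+\<omega>. ennreal (norm (V0 \<omega> - bx) powr p) \<partial>M) = ennreal m"
  shows "(\<integral>\<^sup>+\<omega>. ennreal (norm (V0 \<omega>) powr p) \<partial>M) \<le> ennreal (4 powr p * (max m 0 + B powr p))"
proof -
  interpret prob_space M by (rule prob)
  have B0: "0 \<le> B" using Bx norm_ge_zero order_trans by blast
  have pt: "ennreal (norm (V0 \<omega>) powr p) \<le> ennreal (4 powr p) * (ennreal (norm (V0 \<omega> - bx) powr p) + ennreal (B powr p))" for \<omega>
  proof -
    have "norm (V0 \<omega>) \<le> norm (V0 \<omega> - bx) + B"
      using norm_triangle_ineq[of "V0 \<omega> - bx" bx] Bx by simp
    then have "norm (V0 \<omega>) powr p \<le> (norm (V0 \<omega> - bx) + B + 0 + 0) powr p"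
      using p by (intro powr_mono2) auto
    also have "\<dots> \<le> 4 powr p * (norm (V0 \<omega> - bx) powr p + B powr p + 0 powr p + 0 powr p)"
      by (rule pow4) (use B0 p in auto)
    finally have "norm (V0 \<omega>) powr p \<le> 4 powr p * (norm (V0 \<omega> - bx) powr p + B powr p)" by simp
    then have "ennreal (norm (V0 \<omega>) powr p) \<le> ennreal (4 powr p * (norm (V0 \<omega> - bx) powr p + B powr p))"
      by (rule ennreal_leI)
    also have "\<dots> = ennreal (4 powr p) * (ennreal (norm (V0 \<omega> - bx) powr p) + ennreal (B powr p))"
      by (simp add: ennreal_mult ennreal_plus)
    finally show ?thesis .
  qed
  have "(\<integral>\<^sup>+\<omega>. ennreal (norm (V0 \<omega>) powr p) \<partial>M)
      \<le> (\<integral>\<^sup>+\<omega>. ennreal (4 powr p) * (ennreal (norm (V0 \<omega> - bx) powr p) + ennreal (B powr p)) \<partial>M)"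
    by (intro nn_integral_mono pt)
  also have "\<dots> = ennreal (4 powr p) * ((\<integral>\<^sup>+\<omega>. ennreal (norm (V0 \<omega> - bx) powr p) \<partial>M) + ennreal (B powr p))"
    using meas by (simp add: nn_integral_cmult nn_integral_add emeasure_space_1)
  also have "\<dots> = ennreal (4 powr p) * (ennreal m + ennreal (B powr p))" unfolding m ..
  also have "\<dots> \<le> ennreal (4 powr p) * (ennreal (max m 0) + ennreal (B powr p))"
    by (intro mult_left_mono add_right_mono ennreal_leI) auto
  also have "\<dots> = ennreal (4 powr p * (max m 0 + B powr p))"
    by (simp add: ennreal_mult ennreal_plus)
  finally show ?thesis .
qed

lemma J_meas:
  fixes W' :: "real \<Rightarrow> 'a \<Rightarrow> real^'n"
  assumes meas': "\<And>r. W' r \<in> borel_measurable M"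
    and cont': "\<And>\<omega>. \<omega> \<in> space M \<Longrightarrow> continuous_on {0..} (\<lambda>r. W' r \<omega>)"
    and t: "0 \<le> t"
  shows "(\<lambda>\<omega>. \<integral>\<^sup>+s. ennreal (indicator {0..t} s * (exp ((s - t) / \<epsilon>) / \<epsilon> * norm (W' t \<omega> - W' s \<omega>) powr p)) \<partial>lborel)
          \<in> borel_measurable M"
proof -
  define F where "F \<omega> s = ennreal (indicator {0..t} s * (exp ((s - t) / \<epsilon>) / \<epsilon> * norm (W' t \<omega> - W' s \<omega>) powr p))" for \<omega> s
  have Feq: "F \<omega> s = ennreal (indicator {0..t} s * (exp ((s - t) / \<epsilon>) / \<epsilon> * norm (W' t \<omega> - W' (max 0 (min t s)) \<omega>) powr p))" for \<omega> s
    unfolding F_def by (cases "s \<in> {0..t}") (auto simp: indicator_def)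
  have H[measurable]: "(\<lambda>z. W' (max 0 (min t (snd z))) (fst z)) \<in> borel_measurable (M \<Otimes>\<^sub>M lborel)"
    by (rule joint_meas[OF meas' cont' t])
  have [measurable]: "\<And>r. W' r \<in> borel_measurable M" by (rule meas')
  have Fm: "case_prod F \<in> borel_measurable (M \<Otimes>\<^sub>M lborel)"
    unfolding Feq[abs_def] split_beta' by measurable
  have "(\<lambda>\<omega>. \<integral>\<^sup>+s. F \<omega> s \<partial>lborel) \<in> borel_measurable M"
    by (rule lborel.borel_measurable_nn_integral[OF Fm])
  then show ?thesis unfolding F_def .
qed

lemma A3_bound:
  fixes W :: "real \<Rightarrow> 'a \<Rightarrow> real^'n"
  assumes BM: "std_BM M W" and t: "0 < t" and eps: "0 < \<epsilon>" and p: "1 \<le> p" "p \<le> real (2 * k)"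
  shows "(\<integral>\<^sup>+\<omega>. ennreal ((sqrt (2 / \<epsilon>) * exp (- t / \<epsilon>) * norm (W t \<omega>)) powr p) \<partial>M)
          \<le> ennreal (2 powr (p / 2) * (real CARD('n) powr p * real CARD('n) * (1 + fact (2 * k) / (2 ^ k * fact k))) * p powr (p / 2))"
proof -
  define Kn where "Kn = real CARD('n) powr p * real CARD('n) * (1 + fact (2 * k) / (2 ^ k * fact k))"
  have Kn0: "0 \<le> Kn" unfolding Kn_def by (auto intro!: mult_nonneg_nonneg add_nonneg_nonneg)
  define c where "c = sqrt (2 / \<epsilon>)"
  define E where "E = exp (- t / \<epsilon>)"
  have E0: "0 < E" "E \<le> 1" unfolding E_def using t eps by auto
  have meas[measurable]: "\<And>r. W r \<in> borel_measurable M" using BM unfolding std_BM_def by blast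
  have ae0: "AE \<omega> in M. W 0 \<omega> = 0" using BM unfolding std_BM_def by auto
  have eq: "ennreal ((c * E * norm (W t \<omega>)) powr p) = ennreal ((c * E) powr p) * ennreal (norm (W t \<omega>) powr p)" for \<omega>
    using E0 by (simp add: c_def powr_mult ennreal_mult)
  have R: "(c * E) powr p * (Kn * t powr (p / 2)) \<le> 2 powr (p / 2) * Kn * p powr (p / 2)"
  proof -
    have "E powr p \<le> E" using E0 p by (intro powr_le_one_le) auto
    have wb: "exp ((0 - t) / \<epsilon>) / \<epsilon> * (t - 0) powr (p / 2) \<le> p powr (p / 2) * \<epsilon> powr (p / 2) * (exp ((0 - t) / (2 * \<epsilon>)) / \<epsilon>)"
      by (rule weight_bound) (use eps t p in auto)
    then have "E * t powr (p / 2) \<le> p powr (p / 2) * \<epsilon> powr (p / 2) * exp ((0 - t) / (2 * \<epsilon>))"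
      unfolding E_def using eps by (simp add: field_simps)
    also have "\<dots> \<le> p powr (p / 2) * \<epsilon> powr (p / 2)"
      using t eps by (intro mult_left_le) auto
    finally have w2: "E * t powr (p / 2) \<le> p powr (p / 2) * \<epsilon> powr (p / 2)" .
    have "(c * E) powr p * (Kn * t powr (p / 2)) = c powr p * Kn * (E powr p * t powr (p / 2))"
      using E0 by (simp add: powr_mult c_def mult_ac)
    also have "\<dots> \<le> c powr p * Kn * (E * t powr (p / 2))"
      using \<open>E powr p \<le> E\<close> Kn0 by (intro mult_left_mono mult_right_mono) auto
    also have "\<dots> \<le> c powr p * Kn * (p powr (p / 2) * \<epsilon> powr (p / 2))"
      using w2 Kn0 by (intro mult_left_mono) auto
    also have "\<dots> = (c powr p * \<epsilon> powr (p / 2)) * Kn * p powr (p / 2)" by (simp add: mult_ac)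
    also have "c powr p * \<epsilon> powr (p / 2) = 2 powr (p / 2)" unfolding c_def by (rule csqrt_powr[OF eps])
    finally show ?thesis .
  qed
  have "(\<integral>\<^sup>+\<omega>. ennreal ((c * E * norm (W t \<omega>)) powr p) \<partial>M)
      = ennreal ((c * E) powr p) * (\<integral>\<^sup>+\<omega>. ennreal (norm (W t \<omega>) powr p) \<partial>M)"
    unfolding eq by (rule nn_integral_cmult) measurable
  also have "\<dots> \<le> ennreal ((c * E) powr p) * ennreal (Kn * (t - 0) powr (p / 2))"
  proof (rule mult_left_mono)
    have "(\<integral>\<^sup>+\<omega>. ennreal (norm (W t \<omega>) powr p) \<partial>M) = (\<integral>\<^sup>+\<omega>. ennreal (norm (W t \<omega> - W 0 \<omega>) powr p) \<partial>M)"
      by (rule nn_integral_cong_AE) (use ae0 in auto)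
    also have "\<dots> \<le> ennreal (Kn * (t - 0) powr (p / 2))"
      unfolding Kn_def by (rule BM_incr_moment[OF BM t]) (use p in auto)
    finally show "(\<integral>\<^sup>+\<omega>. ennreal (norm (W t \<omega>) powr p) \<partial>M) \<le> ennreal (Kn * (t - 0) powr (p / 2))" .
  qed simp
  also have "ennreal ((c * E) powr p) * ennreal (Kn * (t - 0) powr (p / 2)) = ennreal ((c * E) powr p * (Kn * t powr (p / 2)))"
    using Kn0 by (simp add: ennreal_mult)
  also have "ennreal ((c * E) powr p * (Kn * t powr (p / 2))) \<le> ennreal (2 powr (p / 2) * Kn * p powr (p / 2))"
    using R by (rule ennreal_leI)
  finally show ?thesis unfolding c_def E_def Kn_def .
qed

lemma main_bound:
  fixes b :: "real^'n \<Rightarrow> real \<Rightarrow> real^'n" and M :: "'a measure" and W X V :: "real \<Rightarrow> 'a \<Rightarrow> real^'n"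
  assumes Bb: "\<forall>x t. 0 \<le> t \<longrightarrow> norm (b x t) \<le> B"
    and bc: "continuous_on (UNIV \<times> {0..}) (\<lambda>z. b (fst z) (snd z))"
    and p: "1 < p" "p \<le> real (2 * k)" and eps: "0 < \<epsilon>"
    and BM: "std_BM M W" and sol: "langevin_solution M \<epsilon> b x W X V"
    and m: "(\<integral>\<^sup>+\<omega>. ennreal (norm (V 0 \<omega> - b x 0) powr p) \<partial>M) = ennreal m"
    and t: "0 \<le> t"
  shows "(\<integral>\<^sup>+\<omega>. ennreal (norm (V t \<omega>) powr p) \<partial>M)
    \<le> ennreal (4 powr p * (4 powr p * (max m 0 + B powr p) + B powr p
         + 3 * (2 powr (p / 2) * (real CARD('n) powr p * real CARD('n) * (1 + fact (2 * k) / (2 ^ k * fact k))) * p powr (p / 2))))"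
proof -
  define Kn where "Kn = real CARD('n) powr p * real CARD('n) * (1 + fact (2 * k) / (2 ^ k * fact k))"
  have Kn0: "0 \<le> Kn" unfolding Kn_def by (auto intro!: mult_nonneg_nonneg add_nonneg_nonneg)
  define Q where "Q = 2 powr (p / 2) * Kn * p powr (p / 2)"
  have Q0: "0 \<le> Q" unfolding Q_def using Kn0 by simp
  define C0 where "C0 = 4 powr p * (max m 0 + B powr p)"
  have C00: "0 \<le> C0" unfolding C0_def by simp
  have B0: "0 \<le> B" using Bb order_trans[OF norm_ge_zero] by blast
  have prob: "prob_space M" using BM unfolding std_BM_def by blast
  interpret prob_space M by (rule prob)
  have measW[measurable]: "\<And>r. W r \<in> borel_measurable M" using BM unfolding std_BM_def by blast
  have measV[measurable]: "\<And>r. V r \<in> borel_measurable M" using sol unfolding langevin_solution_def by blast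
  have V0b: "(\<integral>\<^sup>+\<omega>. ennreal (norm (V 0 \<omega>) powr p) \<partial>M) \<le> ennreal C0"
    unfolding C0_def by (rule V0_bound[OF prob measV _ _ m]) (use Bb p in auto)
  have goal_le: "ennreal C0 \<le> ennreal (4 powr p * (C0 + B powr p + 3 * Q))"
  proof (rule ennreal_leI)
    have "C0 \<le> 1 * (C0 + B powr p + 3 * Q)" using Q0 by simp
    also have "\<dots> \<le> 4 powr p * (C0 + B powr p + 3 * Q)"
      using C00 Q0 p by (intro mult_right_mono) (auto simp: ge_one_powr_ge_zero)
    finally show "C0 \<le> 4 powr p * (C0 + B powr p + 3 * Q)" .
  qed
  show ?thesis
  proof (cases "t = 0")
    case True
    show ?thesis using order_trans[OF V0b goal_le] unfolding C0_def Q_def Kn_def by (simp only: True)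
  next
    case False
    then have tp: "0 < t" using t by simp
    define c where "c = sqrt (2 / \<epsilon>)"
    have c0: "0 \<le> c" unfolding c_def using eps by simp
    have aeBM: "AE \<omega> in M. W 0 \<omega> = 0 \<and> continuous_on {0..} (\<lambda>t. W t \<omega>)"
      using BM unfolding std_BM_def by blast
    have aeC: "AE \<omega> in M. continuous_on {0..} (\<lambda>t. W t \<omega>)" using aeBM by auto
    from aeC obtain N where N: "{\<omega> \<in> space M. \<not> continuous_on {0..} (\<lambda>t. W t \<omega>)} \<subseteq> N"
      "emeasure M N = 0" "N \<in> sets M" by (rule AE_E)
    have [measurable]: "N \<in> sets M" by (rule N(3))
    define W' where "W' r \<omega> = (if \<omega> \<in> N then 0 else W r \<omega>)" for r \<omega>
    have measW': "\<And>r. W' r \<in> borel_measurable M" unfolding W'_def by measurable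
    have contW': "continuous_on {0..} (\<lambda>r. W' r \<omega>)" if "\<omega> \<in> space M" for \<omega>
    proof (cases "\<omega> \<in> N")
      case True then show ?thesis unfolding W'_def by simp
    next
      case False
      then have "continuous_on {0..} (\<lambda>t. W t \<omega>)" using N(1) that by blast
      then show ?thesis unfolding W'_def using False by simp
    qed
    have notN: "AE \<omega> in M. \<omega> \<notin> N" by (rule AE_not_in) (use N in auto)
    have aeW': "AE \<omega> in M. \<forall>r. W' r \<omega> = W r \<omega>" using notN unfolding W'_def by auto
    have aesol: "AE \<omega> in M. continuous_on {0..} (\<lambda>t. V t \<omega>) \<and>
        (\<forall>t\<ge>0. X t \<omega> = x + integral {0..t} (\<lambda>s. V s \<omega>) \<and>
                V t \<omega> = V 0 \<omega> + integral {0..t} (\<lambda>s. (1 / \<epsilon>) *\<^sub>R (b (X s \<omega>) s - V s \<omega>))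
                          + sqrt (2 / \<epsilon>) *\<^sub>R W t \<omega>)"
      using sol unfolding langevin_solution_def by blast
    define Jn where "Jn \<omega> = (\<integral>\<^sup>+s. ennreal (indicator {0..t} s * (exp ((s - t) / \<epsilon>) / \<epsilon> * norm (W' t \<omega> - W' s \<omega>) powr p)) \<partial>lborel)" for \<omega>
    define A3 where "A3 \<omega> = ennreal ((c * exp (- t / \<epsilon>) * norm (W t \<omega>)) powr p)" for \<omega>
    have Jm: "Jn \<in> borel_measurable M" unfolding Jn_def[abs_def] by (rule J_meas[OF measW' contW' t])
    have A3m: "A3 \<in> borel_measurable M" unfolding A3_def[abs_def] by measurable
    have ptw: "AE \<omega> in M. ennreal (norm (V t \<omega>) powr p) \<le> ennreal (4 powr p) * (ennreal (norm (V 0 \<omega>) powr p)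
          + ennreal (B powr p) + A3 \<omega> + ennreal (c powr p) * Jn \<omega>)"
      using aeBM aesol notN
    proof eventually_elim
      case (elim \<omega>)
      have X': "\<forall>t\<ge>0. X t \<omega> = x + integral {0..t} (\<lambda>s. V s \<omega>)" using elim by blast
      have V': "\<forall>t\<ge>0. V t \<omega> = V 0 \<omega> + integral {0..t} (\<lambda>s. (1 / \<epsilon>) *\<^sub>R (b (X s \<omega>) s - V s \<omega>)) + c *\<^sub>R W t \<omega>"
        using elim unfolding c_def by blast
      have "ennreal (norm (V t \<omega>) powr p) \<le> ennreal (4 powr p) * (ennreal (norm (V 0 \<omega>) powr p) + ennreal (B powr p)
           + ennreal ((c * exp (- t / \<epsilon>) * norm (W t \<omega>)) powr p)
           + ennreal (c powr p) * (\<integral>\<^sup>+s. ennreal (indicator {0..t} s * (exp ((s - t) / \<epsilon>) / \<epsilon> * norm (W t \<omega> - W s \<omega>) powr p)) \<partial>lborel))"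
        by (rule pathwise_p[OF eps tp c0 p(1) Bb bc _ _ _ X' V']) (use elim in auto)
      moreover have "W' t \<omega> = W t \<omega>" "\<And>s. W' s \<omega> = W s \<omega>" using elim unfolding W'_def by auto
      ultimately show ?case unfolding Jn_def A3_def by simp
    qed
    have "(\<integral>\<^sup>+\<omega>. ennreal (norm (V t \<omega>) powr p) \<partial>M)
        \<le> (\<integral>\<^sup>+\<omega>. ennreal (4 powr p) * (ennreal (norm (V 0 \<omega>) powr p)
          + ennreal (B powr p) + A3 \<omega> + ennreal (c powr p) * Jn \<omega>) \<partial>M)"
      by (rule nn_integral_mono_AE[OF ptw])
    also have "\<dots> = ennreal (4 powr p) * ((\<integral>\<^sup>+\<omega>. ennreal (norm (V 0 \<omega>) powr p) \<partial>M)
          + ennreal (B powr p) + (\<integral>\<^sup>+\<omega>. A3 \<omega> \<partial>M) + ennreal (c powr p) * (\<integral>\<^sup>+\<omega>. Jn \<omega> \<partial>M))"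
      using Jm A3m by (simp add: nn_integral_cmult nn_integral_add emeasure_space_1)
    also have "\<dots> \<le> ennreal (4 powr p) * (ennreal C0 + ennreal (B powr p) + ennreal Q + ennreal (c powr p) * ennreal (2 * Kn * p powr (p / 2) * \<epsilon> powr (p / 2)))"
    proof (intro mult_left_mono add_mono order_refl)
      show "(\<integral>\<^sup>+\<omega>. ennreal (norm (V 0 \<omega>) powr p) \<partial>M) \<le> ennreal C0" by (rule V0b)
      show "(\<integral>\<^sup>+\<omega>. A3 \<omega> \<partial>M) \<le> ennreal Q"
        unfolding A3_def c_def Q_def Kn_def by (rule A3_bound[OF BM tp eps]) (use p in auto)
      show "(\<integral>\<^sup>+\<omega>. Jn \<omega> \<partial>M) \<le> ennreal (2 * Kn * p powr (p / 2) * \<epsilon> powr (p / 2))"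
        unfolding Jn_def Kn_def by (rule EJ_bound[OF BM tp eps _ _ measW' contW' aeW']) (use p in auto)
    qed simp_all
    also have "\<dots> = ennreal (4 powr p * (C0 + B powr p + 3 * Q))"
    proof -
      have "c powr p * (2 * Kn * p powr (p / 2) * \<epsilon> powr (p / 2)) = 2 * Q"
      proof -
        have "c powr p * (2 * Kn * p powr (p / 2) * \<epsilon> powr (p / 2)) = (c powr p * \<epsilon> powr (p / 2)) * (2 * Kn * p powr (p / 2))"
          by (simp add: mult_ac)
        also have "c powr p * \<epsilon> powr (p / 2) = 2 powr (p / 2)" unfolding c_def by (rule csqrt_powr[OF eps])
        finally show ?thesis unfolding Q_def by (simp add: mult_ac)
      qed
      note h = this
      have "ennreal (c powr p) * ennreal (2 * Kn * p powr (p / 2) * \<epsilon> powr (p / 2))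
          = ennreal (c powr p * (2 * Kn * p powr (p / 2) * \<epsilon> powr (p / 2)))"
        by (rule ennreal_mult[symmetric]) (use Kn0 in auto)
      then have e: "ennreal (c powr p) * ennreal (2 * Kn * p powr (p / 2) * \<epsilon> powr (p / 2)) = ennreal (2 * Q)"
        unfolding h .
      have s: "ennreal C0 + ennreal (B powr p) + ennreal Q + ennreal (2 * Q) = ennreal (C0 + B powr p + 3 * Q)"
      proof -
        have "ennreal C0 + ennreal (B powr p) + ennreal Q + ennreal (2 * Q) = ennreal (C0 + B powr p + Q + 2 * Q)"
          using C00 Q0 by (simp only: ennreal_plus add_nonneg_nonneg powr_ge_zero mult_nonneg_nonneg zero_le_numeral)
        also have "C0 + B powr p + Q + 2 * Q = C0 + B powr p + 3 * Q" by simp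
        finally show ?thesis .
      qed
      have "ennreal (4 powr p) * ennreal (C0 + B powr p + 3 * Q) = ennreal (4 powr p * (C0 + B powr p + 3 * Q))"
        by (rule ennreal_mult[symmetric]) (use C00 Q0 in auto)
      then show ?thesis unfolding e s .
    qed
    finally show ?thesis unfolding C0_def Q_def Kn_def .
  qed
qed

theorem lemma3p6:
  fixes b :: "real^'n \<Rightarrow> real \<Rightarrow> real^'n" and p :: real and m :: real
  assumes "smooth_bounded b" and "periodic_drift b" and "p \<ge> 4"
  shows "\<exists>C>0. \<forall>(M :: 'a measure) W X V \<epsilon> x.
           \<epsilon> > 0 \<and> std_BM M W \<and> indep_of_BM M W (V 0) \<and>
           langevin_solution M \<epsilon> b x W X V \<and>
           integrable M (\<lambda>\<omega>. V 0 \<omega> - b x 0) \<and>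
           (\<integral>\<omega>. (V 0 \<omega> - b x 0) \<partial>M) = 0 \<and>
           (\<integral>\<^sup>+\<omega>. ennreal (norm (V 0 \<omega> - b x 0) powr p) \<partial>M) = ennreal m
           \<longrightarrow> (\<forall>t\<ge>0. (\<integral>\<^sup>+\<omega>. ennreal (norm (V t \<omega>) powr p) \<partial>M) \<le> ennreal C)"
proof -
  obtain B where B0: "0 \<le> B" and Bb: "\<forall>x t. 0 \<le> t \<longrightarrow> norm (b x t) \<le> B"
    using b_props(1)[OF assms(1)] by blast
  obtain L where L0: "0 \<le> L" and
    Lb: "\<forall>x y s t. 0 \<le> s \<longrightarrow> 0 \<le> t \<longrightarrow> norm (b y s - b x t) \<le> L * (norm (y - x) + \<bar>s - t\<bar>)"
    using b_props(2)[OF assms(1)] by blast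
  have bc: "continuous_on (UNIV \<times> {0..}) (\<lambda>z. b (fst z) (snd z))" by (rule b_cont[OF Lb L0])
  define k where "k = nat \<lceil>p / 2\<rceil>"
  have pk: "p \<le> real (2 * k)" unfolding k_def using assms(3) by linarith
  have p1: "1 < p" using assms(3) by simp
  define Cb where "Cb = 4 powr p * (4 powr p * (max m 0 + B powr p) + B powr p
         + 3 * (2 powr (p / 2) * (real CARD('n) powr p * real CARD('n) * (1 + fact (2 * k) / (2 ^ k * fact k))) * p powr (p / 2)))"
  have Cb0: "0 \<le> Cb" unfolding Cb_def by (auto intro!: mult_nonneg_nonneg add_nonneg_nonneg)
  show ?thesis
  proof (intro exI[of _ "Cb + 1"] conjI allI impI)
    show "0 < Cb + 1" using Cb0 by simp
    fix M :: "'a measure" and W X V :: "real \<Rightarrow> 'a \<Rightarrow> real^'n" and \<epsilon> :: real and x and t :: real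
    assume H: "\<epsilon> > 0 \<and> std_BM M W \<and> indep_of_BM M W (V 0) \<and>
           langevin_solution M \<epsilon> b x W X V \<and>
           integrable M (\<lambda>\<omega>. V 0 \<omega> - b x 0) \<and>
           (\<integral>\<omega>. (V 0 \<omega> - b x 0) \<partial>M) = 0 \<and>
           (\<integral>\<^sup>+\<omega>. ennreal (norm (V 0 \<omega> - b x 0) powr p) \<partial>M) = ennreal m"
      and t: "0 \<le> t"
    have "(\<integral>\<^sup>+\<omega>. ennreal (norm (V t \<omega>) powr p) \<partial>M) \<le> ennreal Cb"
      unfolding Cb_def by (rule main_bound[OF Bb bc p1 pk]) (use H t in auto)
    also have "\<dots> \<le> ennreal (Cb + 1)" by (intro ennreal_leI) simp
    finally show "(\<integral>\<^sup>+\<omega>. ennreal (norm (V t \<omega>) powr p) \<partial>M) \<le> ennreal (Cb + 1)" .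
  qed
qed


end
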